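(* In the setting below, the asymmetric product $T\rtimes_\circ S$ is a simple left brace if and only if $f_z-\mathrm{id}$ is bijective on $V_z$ for every $z\in\mathbb{Z}/(n)$.
   Context: A left brace is a set $B$ with two operations $+,\cdot$ such that $(B,+)$ is an abelian group, $(B,\cdot)$ is a group and $a(b+c)+a=ab+ac$ for all $a,b,c$; $\lambda_a(b)=ab-a$. A left ideal is a subgroup $L$ of $(B,+)$ with $\lambda_b(L)\subseteq L$ for all $b$; an ideal is a left ideal that is a normal subgroup of $(B,\cdot)$; $B$ is simple if $B\neq0$ and its only ideals are $0$ and $B$. For a symmetric bi-additive map $\beta\colon X\times X\to Y$, $\mathrm{O}(X,\beta)=\{g\in\mathrm{Aut}(X,+):\beta(g(x),g(y))=\beta(x,y)\ \forall x,y\}$. Setting: $n>1$, indices $z\in\mathbb{Z}/(n)$. For each $z$, $p_z$ is a prime ($p_z\ne p_{z'}$ for $z\ne z'$), $r_z$ a positive integer, $V_z$ a finite-dimensional $\mathbb{Z}/(p_z)$-vector space with non-singular symmetric bilinear form $b_z$, and $f_z\in\mathrm{O}(V_z,b_z)$ of order $p_{z-1}$. Let $T_z=M_{r_z,r_{z-1}}(V_z)$ ($r_z\times r_{z-1}$ matrices over $V_z$) and $S_z=(\mathbb{Z}/(p_z))^{r_z}$ with standard basis $e^{(z)}_i$. Define $b'_z((u_{i,j}),(u'_{i,j}))=\sum_{i=1}^{r_z}\big(\sum_{j=1}^{r_{z-1}}b_z(u_{i,j},u'_{i,j})\big)e^{(z)}_i$ and, for $s=\sum_j\mu_je^{(z-1)}_j\in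 S_{z-1}$, $f^{(z-1,z)}_s((u_{i,j}))=(f_z^{\mu_j}(u_{i,j}))$. Let $T=T_1\times\cdots\times T_n$, $S=S_1\times\cdots\times S_n$, $b(t,t')=(b'_1(t_1,t'_1),\dots,b'_n(t_n,t'_n))$, and $\alpha_{(s_1,\dots,s_n)}(t_1,\dots,t_n)=(f^{(n,1)}_{s_n}(t_1),f^{(1,2)}_{s_1}(t_2),\dots,f^{(n-1,n)}_{s_{n-1}}(t_n))$. The asymmetric product $T\rtimes_\circ S$ is the set $T\times S$ with $(t,s)+(t',s')=(t+t',s+s'+b(t,t'))$ and $(t,s)\cdot(t',s')=(t+\alpha_s(t'),s+s')$; it is a left brace. *)

theory Defs
  imports "HOL-Algebra.Coset" "HOL-Computational_Algebra.Primes"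
begin

definition grp_of :: "'a set \<Rightarrow> ('a \<Rightarrow> 'a \<Rightarrow> 'a) \<Rightarrow> 'a monoid" where
  "grp_of B opr = \<lparr>carrier = B, monoid.mult = opr,
     one = (THE e. e \<in> B \<and> (\<forall>x\<in>B. opr e x = x \<and> opr x e = x))\<rparr>"

definition is_left_brace :: "'a set \<Rightarrow> ('a \<Rightarrow> 'a \<Rightarrow> 'a) \<Rightarrow> ('a \<Rightarrow> 'a \<Rightarrow> 'a) \<Rightarrow> bool" where
  "is_left_brace B add mul \<longleftrightarrow>
     comm_group (grp_of B add) \<and> group (grp_of B mul) \<and>
     (\<forall>a\<in>B. \<forall>b\<in>B. \<forall>c\<in>B. add (mul a (add b c)) a = add (mul a b) (mul a c))"

definition brace_lambda :: "'a set \<Rightarrow> ('a \<Rightarrow> 'a \<Rightarrow> 'a) \<Rightarrow> ('a \<Rightarrow> 'a \<Rightarrow> 'a) \<Rightarrow> 'a \<Rightarrow> 'a \<Rightarrow> 'a" where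
  "brace_lambda B add mul a x = add (mul a x) (inv\<^bsub>grp_of B add\<^esub> a)"

definition is_left_ideal :: "'a set \<Rightarrow> ('a \<Rightarrow> 'a \<Rightarrow> 'a) \<Rightarrow> ('a \<Rightarrow> 'a \<Rightarrow> 'a) \<Rightarrow> 'a set \<Rightarrow> bool" where
  "is_left_ideal B add mul L \<longleftrightarrow>
     subgroup L (grp_of B add) \<and> (\<forall>a\<in>B. \<forall>x\<in>L. brace_lambda B add mul a x \<in> L)"

definition is_brace_ideal :: "'a set \<Rightarrow> ('a \<Rightarrow> 'a \<Rightarrow> 'a) \<Rightarrow> ('a \<Rightarrow> 'a \<Rightarrow> 'a) \<Rightarrow> 'a set \<Rightarrow> bool" where
  "is_brace_ideal B add mul L \<longleftrightarrow> is_left_ideal B add mul L \<and> normal L (grp_of B mul)"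

definition is_simple_left_brace :: "'a set \<Rightarrow> ('a \<Rightarrow> 'a \<Rightarrow> 'a) \<Rightarrow> ('a \<Rightarrow> 'a \<Rightarrow> 'a) \<Rightarrow> bool" where
  "is_simple_left_brace B add mul \<longleftrightarrow>
     is_left_brace B add mul \<and> B \<noteq> {\<one>\<^bsub>grp_of B add\<^esub>} \<and>
     (\<forall>L. is_brace_ideal B add mul L \<longrightarrow> L = {\<one>\<^bsub>grp_of B add\<^esub>} \<or> L = B)"

text \<open>A d-dimensional Z/(p)-vector space is modelled as (Z/(p))^d: functions nat => int
  with values in {0..<p}, vanishing at coordinates >= d.\<close>

type_synonym vec = "nat \<Rightarrow> int"

definition Vsp :: "nat \<Rightarrow> nat \<Rightarrow> vec set" where
  "Vsp p d = {v. \<forall>k. 0 \<le> v k \<and> v k < int p \<and> (d \<le> k \<longrightarrow> v k = 0)}"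

definition vzero :: vec where "vzero = (\<lambda>k. 0)"

definition vadd :: "nat \<Rightarrow> nat \<Rightarrow> vec \<Rightarrow> vec \<Rightarrow> vec" where
  "vadd p d u v = (\<lambda>k. if k < d then (u k + v k) mod int p else 0)"

definition vsub :: "nat \<Rightarrow> nat \<Rightarrow> vec \<Rightarrow> vec \<Rightarrow> vec" where
  "vsub p d u v = (\<lambda>k. if k < d then (u k - v k) mod int p else 0)"

text \<open>Non-singular symmetric bilinear form V x V -> Z/(p) (values as integers in {0..<p});
  bilinearity over Z/(p) is the same as bi-additivity.\<close>
definition nonsing_sym_form :: "nat \<Rightarrow> nat \<Rightarrow> (vec \<Rightarrow> vec \<Rightarrow> int) \<Rightarrow> bool" where
  "nonsing_sym_form p d \<beta> \<longleftrightarrow>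
     (\<forall>u\<in>Vsp p d. \<forall>v\<in>Vsp p d. 0 \<le> \<beta> u v \<and> \<beta> u v < int p \<and> \<beta> u v = \<beta> v u) \<and>
     (\<forall>u\<in>Vsp p d. \<forall>v\<in>Vsp p d. \<forall>w\<in>Vsp p d. \<beta> (vadd p d u v) w = (\<beta> u w + \<beta> v w) mod int p) \<and>
     (\<forall>u\<in>Vsp p d. (\<forall>v\<in>Vsp p d. \<beta> u v = 0) \<longrightarrow> u = vzero)"

definition orth_grp :: "nat \<Rightarrow> nat \<Rightarrow> (vec \<Rightarrow> vec \<Rightarrow> int) \<Rightarrow> (vec \<Rightarrow> vec) set" where
  "orth_grp p d \<beta> = {g. bij_betw g (Vsp p d) (Vsp p d) \<and>
     (\<forall>u\<in>Vsp p d. \<forall>v\<in>Vsp p d. g (vadd p d u v) = vadd p d (g u) (g v)) \<and>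
     (\<forall>u\<in>Vsp p d. \<forall>v\<in>Vsp p d. \<beta> (g u) (g v) = \<beta> u v)}"

definition has_order_on :: "vec set \<Rightarrow> (vec \<Rightarrow> vec) \<Rightarrow> nat \<Rightarrow> bool" where
  "has_order_on V g k \<longleftrightarrow> 0 < k \<and> (\<forall>u\<in>V. (g ^^ k) u = u) \<and>
     (\<forall>j. 0 < j \<and> j < k \<longrightarrow> (\<exists>u\<in>V. (g ^^ j) u \<noteq> u))"

text \<open>Indices Z/(n) are represented by 0..<n; z-1 is cprev n z.\<close>
definition cprev :: "nat \<Rightarrow> nat \<Rightarrow> nat" where "cprev n z = (z + n - 1) mod n"

type_synonym tcomp = "nat \<Rightarrow> nat \<Rightarrow> nat \<Rightarrow> vec"   \<comment> \<open>z, i, j \<mapsto> (t_z)_{i,j}\<close>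
type_synonym scomp = "nat \<Rightarrow> nat \<Rightarrow> int"         \<comment> \<open>z, i \<mapsto> i-th coefficient of s_z\<close>

definition AP_T :: "nat \<Rightarrow> (nat \<Rightarrow> nat) \<Rightarrow> (nat \<Rightarrow> nat) \<Rightarrow> (nat \<Rightarrow> nat) \<Rightarrow> tcomp set" where
  "AP_T n p r d = {t. \<forall>z i j. if z < n \<and> i < r z \<and> j < r (cprev n z)
      then t z i j \<in> Vsp (p z) (d z) else t z i j = vzero}"

definition AP_S :: "nat \<Rightarrow> (nat \<Rightarrow> nat) \<Rightarrow> (nat \<Rightarrow> nat) \<Rightarrow> scomp set" where
  "AP_S n p r = {s. \<forall>z i. if z < n \<and> i < r z
      then 0 \<le> s z i \<and> s z i < int (p z) else s z i = 0}"

definition AP_carrier :: "nat \<Rightarrow> (nat \<Rightarrow> nat) \<Rightarrow> (nat \<Rightarrow> nat) \<Rightarrow> (nat \<Rightarrow> nat) \<Rightarrow> (tcomp \<times> scomp) set" where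
  "AP_carrier n p r d = AP_T n p r d \<times> AP_S n p r"

definition AP_tadd :: "nat \<Rightarrow> (nat \<Rightarrow> nat) \<Rightarrow> (nat \<Rightarrow> nat) \<Rightarrow> (nat \<Rightarrow> nat) \<Rightarrow> tcomp \<Rightarrow> tcomp \<Rightarrow> tcomp" where
  "AP_tadd n p r d t t' = (\<lambda>z i j. if z < n \<and> i < r z \<and> j < r (cprev n z)
      then vadd (p z) (d z) (t z i j) (t' z i j) else vzero)"

definition AP_sadd :: "nat \<Rightarrow> (nat \<Rightarrow> nat) \<Rightarrow> (nat \<Rightarrow> nat) \<Rightarrow> scomp \<Rightarrow> scomp \<Rightarrow> scomp" where
  "AP_sadd n p r s s' = (\<lambda>z i. if z < n \<and> i < r z then (s z i + s' z i) mod int (p z) else 0)"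

definition AP_b :: "nat \<Rightarrow> (nat \<Rightarrow> nat) \<Rightarrow> (nat \<Rightarrow> nat) \<Rightarrow> (nat \<Rightarrow> vec \<Rightarrow> vec \<Rightarrow> int) \<Rightarrow> tcomp \<Rightarrow> tcomp \<Rightarrow> scomp" where
  "AP_b n p r b t t' = (\<lambda>z i. if z < n \<and> i < r z
      then (\<Sum>j<r (cprev n z). b z (t z i j) (t' z i j)) mod int (p z) else 0)"

text \<open>alpha_s(t)_z = f^{(z-1,z)}_{s_{z-1}}(t_z), i.e. entry (i,j) is f_z^{mu_j}(u_ij) with
  s_{z-1} = sum_j mu_j e_j.\<close>
definition AP_alpha :: "nat \<Rightarrow> (nat \<Rightarrow> nat) \<Rightarrow> (nat \<Rightarrow> nat) \<Rightarrow> (nat \<Rightarrow> vec \<Rightarrow> vec) \<Rightarrow> scomp \<Rightarrow> tcomp \<Rightarrow> tcomp" where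
  "AP_alpha n p r f s t = (\<lambda>z i j. if z < n \<and> i < r z \<and> j < r (cprev n z)
      then (f z ^^ nat (s (cprev n z) j)) (t z i j) else vzero)"

definition AP_add :: "nat \<Rightarrow> (nat \<Rightarrow> nat) \<Rightarrow> (nat \<Rightarrow> nat) \<Rightarrow> (nat \<Rightarrow> nat) \<Rightarrow> (nat \<Rightarrow> vec \<Rightarrow> vec \<Rightarrow> int)
    \<Rightarrow> tcomp \<times> scomp \<Rightarrow> tcomp \<times> scomp \<Rightarrow> tcomp \<times> scomp" where
  "AP_add n p r d b x y =
     (AP_tadd n p r d (fst x) (fst y),
      AP_sadd n p r (AP_sadd n p r (snd x) (snd y)) (AP_b n p r b (fst x) (fst y)))"

definition AP_mul :: "nat \<Rightarrow> (nat \<Rightarrow> nat) \<Rightarrow> (nat \<Rightarrow> nat) \<Rightarrow> (nat \<Rightarrow> nat) \<Rightarrow> (nat \<Rightarrow> vec \<Rightarrow> vec)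
    \<Rightarrow> tcomp \<times> scomp \<Rightarrow> tcomp \<times> scomp \<Rightarrow> tcomp \<times> scomp" where
  "AP_mul n p r d f x y =
     (AP_tadd n p r d (fst x) (AP_alpha n p r f (snd x) (fst y)),
      AP_sadd n p r (snd x) (snd y))"

end

theory Submission
  imports Defs
begin


definition gadd :: "('t\<Rightarrow>'t\<Rightarrow>'t) \<Rightarrow> ('s\<Rightarrow>'s\<Rightarrow>'s) \<Rightarrow> ('t\<Rightarrow>'t\<Rightarrow>'s) \<Rightarrow> 't\<times>'s \<Rightarrow> 't\<times>'s \<Rightarrow> 't\<times>'s" where
  "gadd tadd sadd bf x y = (tadd (fst x) (fst y), sadd (sadd (snd x) (snd y)) (bf (fst x) (fst y)))"
definition gmul :: "('t\<Rightarrow>'t\<Rightarrow>'t) \<Rightarrow> ('s\<Rightarrow>'s\<Rightarrow>'s) \<Rightarrow> ('s\<Rightarrow>'t\<Rightarrow>'t) \<Rightarrow> 't\<times>'s \<Rightarrow> 't\<times>'s \<Rightarrow> 't\<times>'s" where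
  "gmul tadd sadd alpha x y = (tadd (fst x) (alpha (snd x) (fst y)), sadd (snd x) (snd y))"

lemma grp_of_carrier[simp]: "carrier (grp_of B opr) = B"
  and grp_of_mult[simp]: "monoid.mult (grp_of B opr) = opr"
  by (simp_all add: grp_of_def)

lemma grp_of_one:
  assumes "e \<in> B" "\<And>x. x\<in>B \<Longrightarrow> opr e x = x \<and> opr x e = x"
  shows "one (grp_of B opr) = e"
  unfolding grp_of_def
  apply simp
  apply (rule the_equality)
  using assms by metis+

lemma grp_of_group:
  assumes cl: "\<And>x y. x\<in>B \<Longrightarrow> y\<in>B \<Longrightarrow> opr x y \<in> B"
    and as: "\<And>x y z. x\<in>B \<Longrightarrow> y\<in>B \<Longrightarrow> z\<in>B \<Longrightarrow> opr (opr x y) z = opr x (opr y z)"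
    and e: "e \<in> B" "\<And>x. x\<in>B \<Longrightarrow> opr e x = x \<and> opr x e = x"
    and iv: "\<And>x. x\<in>B \<Longrightarrow> \<exists>y\<in>B. opr y x = e"
  shows "group (grp_of B opr)"
proof -
  have o: "one (grp_of B opr) = e" by (rule grp_of_one[OF e])
  show ?thesis
    by (rule groupI) (use cl as e iv o in auto)
qed

lemma grp_of_comm_group:
  assumes cl: "\<And>x y. x\<in>B \<Longrightarrow> y\<in>B \<Longrightarrow> opr x y \<in> B"
    and as: "\<And>x y z. x\<in>B \<Longrightarrow> y\<in>B \<Longrightarrow> z\<in>B \<Longrightarrow> opr (opr x y) z = opr x (opr y z)"
    and cm: "\<And>x y. x\<in>B \<Longrightarrow> y\<in>B \<Longrightarrow> opr x y = opr y x"
    and e: "e \<in> B" "\<And>x. x\<in>B \<Longrightarrow> opr e x = x \<and> opr x e = x"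
    and iv: "\<And>x. x\<in>B \<Longrightarrow> \<exists>y\<in>B. opr y x = e"
  shows "comm_group (grp_of B opr)"
proof -
  have o: "one (grp_of B opr) = e" by (rule grp_of_one[OF e])
  show ?thesis
    by (rule comm_groupI) (use cl as cm e iv o in auto)
qed

locale aprod =
  fixes T :: "'t set" and tadd :: "'t\<Rightarrow>'t\<Rightarrow>'t" and tzero :: 't and tneg :: "'t\<Rightarrow>'t"
    and S :: "'s set" and sadd :: "'s\<Rightarrow>'s\<Rightarrow>'s" and szero :: 's and sneg :: "'s\<Rightarrow>'s"
    and bf :: "'t\<Rightarrow>'t\<Rightarrow>'s" and alpha :: "'s\<Rightarrow>'t\<Rightarrow>'t"
  assumes tac: "abel_semigroup tadd" and sac: "abel_semigroup sadd"
    and tadd_T[simp]: "t\<in>T \<Longrightarrow> t'\<in>T \<Longrightarrow> tadd t t' \<in> T"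
    and tzero_T[simp]: "tzero \<in> T" and tneg_T[simp]: "t\<in>T \<Longrightarrow> tneg t \<in> T"
    and tzero_l[simp]: "t\<in>T \<Longrightarrow> tadd tzero t = t" and tneg_r[simp]: "t\<in>T \<Longrightarrow> tadd t (tneg t) = tzero"
    and sadd_S[simp]: "s\<in>S \<Longrightarrow> s'\<in>S \<Longrightarrow> sadd s s' \<in> S"
    and szero_S[simp]: "szero \<in> S" and sneg_S[simp]: "s\<in>S \<Longrightarrow> sneg s \<in> S"
    and szero_l[simp]: "s\<in>S \<Longrightarrow> sadd szero s = s" and sneg_r[simp]: "s\<in>S \<Longrightarrow> sadd s (sneg s) = szero"
    and bf_S[simp]: "t\<in>T \<Longrightarrow> t'\<in>T \<Longrightarrow> bf t t' \<in> S"
    and bf_sym: "t\<in>T \<Longrightarrow> t'\<in>T \<Longrightarrow> bf t t' = bf t' t"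
    and bf_add: "t\<in>T \<Longrightarrow> t'\<in>T \<Longrightarrow> t''\<in>T \<Longrightarrow> bf (tadd t t') t'' = sadd (bf t t'') (bf t' t'')"
    and alpha_T[simp]: "s\<in>S \<Longrightarrow> t\<in>T \<Longrightarrow> alpha s t \<in> T"
    and alpha_add: "s\<in>S \<Longrightarrow> t\<in>T \<Longrightarrow> t'\<in>T \<Longrightarrow> alpha s (tadd t t') = tadd (alpha s t) (alpha s t')"
    and alpha_zero[simp]: "t\<in>T \<Longrightarrow> alpha szero t = t"
    and alpha_comp: "s\<in>S \<Longrightarrow> s'\<in>S \<Longrightarrow> t\<in>T \<Longrightarrow> alpha (sadd s s') t = alpha s (alpha s' t)"
    and bf_alpha[simp]: "s\<in>S \<Longrightarrow> t\<in>T \<Longrightarrow> t'\<in>T \<Longrightarrow> bf (alpha s t) (alpha s t') = bf t t'"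
begin

sublocale ta: abel_semigroup tadd by (rule tac)
sublocale sa: abel_semigroup sadd by (rule sac)

lemma tzero_r[simp]: "t\<in>T \<Longrightarrow> tadd t tzero = t" by (metis ta.commute tzero_l)
lemma tneg_l[simp]: "t\<in>T \<Longrightarrow> tadd (tneg t) t = tzero" by (metis ta.commute tneg_r)
lemma szero_r[simp]: "s\<in>S \<Longrightarrow> sadd s szero = s" by (metis sa.commute szero_l)
lemma sneg_l[simp]: "s\<in>S \<Longrightarrow> sadd (sneg s) s = szero" by (metis sa.commute sneg_r)

lemma tcancel: assumes "a\<in>T" "x\<in>T" "y\<in>T" "tadd a x = tadd a y" shows "x = y"
proof -
  have "tadd (tneg a) (tadd a x) = tadd (tneg a) (tadd a y)" using assms by simp
  then have "tadd (tadd (tneg a) a) x = tadd (tadd (tneg a) a) y" by (simp add: ta.assoc)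
  then show ?thesis using assms by simp
qed
lemma scancel: assumes "a\<in>S" "x\<in>S" "y\<in>S" "sadd a x = sadd a y" shows "x = y"
proof -
  have "sadd (sneg a) (sadd a x) = sadd (sneg a) (sadd a y)" using assms by simp
  then have "sadd (sadd (sneg a) a) x = sadd (sadd (sneg a) a) y" by (simp add: sa.assoc)
  then show ?thesis using assms by simp
qed
lemma tneg_unique: "a\<in>T \<Longrightarrow> x\<in>T \<Longrightarrow> tadd a x = tzero \<Longrightarrow> x = tneg a"
  by (rule tcancel[of a]) auto
lemma sneg_unique: "a\<in>S \<Longrightarrow> x\<in>S \<Longrightarrow> sadd a x = szero \<Longrightarrow> x = sneg a"
  by (rule scancel[of a]) auto
lemma tneg_tneg[simp]: "t\<in>T \<Longrightarrow> tneg (tneg t) = t"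
  by (metis tneg_T tneg_l tneg_unique)
lemma sneg_sneg[simp]: "s\<in>S \<Longrightarrow> sneg (sneg s) = s"
  by (metis sneg_S sneg_l sneg_unique)
lemma sneg_zero[simp]: "sneg szero = szero"
  by (metis szero_S szero_l sneg_unique)
lemma tneg_zero[simp]: "tneg tzero = tzero"
  by (metis tzero_T tzero_l tneg_unique)
lemma sneg_add: "s\<in>S \<Longrightarrow> s'\<in>S \<Longrightarrow> sneg (sadd s s') = sadd (sneg s) (sneg s')"
proof -
  assume a: "s\<in>S" "s'\<in>S"
  have "sadd (sadd s s') (sadd (sneg s) (sneg s')) = sadd (sadd s (sneg s)) (sadd s' (sneg s'))"
    by (simp add: ac_simps)
  also have "\<dots> = szero" using a by simp
  finally show ?thesis using a by (metis sneg_unique sadd_S sneg_S)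
qed

lemma bf_add2: "t\<in>T \<Longrightarrow> t'\<in>T \<Longrightarrow> t''\<in>T \<Longrightarrow> bf t'' (tadd t t') = sadd (bf t'' t) (bf t'' t')"
  by (metis bf_add bf_sym tadd_T)
lemma bf_zero_l[simp]: "t\<in>T \<Longrightarrow> bf tzero t = szero"
proof -
  assume a: "t\<in>T"
  have "bf tzero t = sadd (bf tzero t) (bf tzero t)" using a bf_add[of tzero tzero t] by simp
  then have "sadd (bf tzero t) szero = sadd (bf tzero t) (bf tzero t)" using a by simp
  then show ?thesis using a by (metis scancel bf_S tzero_T szero_S)
qed
lemma bf_zero_r[simp]: "t\<in>T \<Longrightarrow> bf t tzero = szero"
  by (metis bf_sym bf_zero_l tzero_T)
lemma bf_neg_l: "t\<in>T \<Longrightarrow> t'\<in>T \<Longrightarrow> bf (tneg t) t' = sneg (bf t t')"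
  by (metis bf_add bf_zero_l tneg_r bf_S tneg_T sneg_unique tadd_T)
lemma bf_neg_r: "t\<in>T \<Longrightarrow> t'\<in>T \<Longrightarrow> bf t' (tneg t) = sneg (bf t' t)"
  by (metis bf_neg_l bf_sym tneg_T)
lemma alpha_tzero[simp]: "s\<in>S \<Longrightarrow> alpha s tzero = tzero"
proof -
  assume a: "s\<in>S"
  have "alpha s tzero = tadd (alpha s tzero) (alpha s tzero)" using a alpha_add[of s tzero tzero] by simp
  then have "tadd (alpha s tzero) tzero = tadd (alpha s tzero) (alpha s tzero)" using a by simp
  then show ?thesis using a by (metis tcancel alpha_T tzero_T)
qed
lemma alpha_neg: "s\<in>S \<Longrightarrow> t\<in>T \<Longrightarrow> alpha s (tneg t) = tneg (alpha s t)"
  by (metis alpha_T alpha_add alpha_tzero tneg_T tneg_r tneg_unique)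
lemma alpha_inv[simp]: "s\<in>S \<Longrightarrow> t\<in>T \<Longrightarrow> alpha s (alpha (sneg s) t) = t"
  by (metis alpha_comp alpha_zero sneg_S sneg_r)
lemma alpha_inv2[simp]: "s\<in>S \<Longrightarrow> t\<in>T \<Longrightarrow> alpha (sneg s) (alpha s t) = t"
  by (metis alpha_comp alpha_zero sneg_S sneg_l)

abbreviation "B \<equiv> T \<times> S"
abbreviation "padd \<equiv> gadd tadd sadd bf"
abbreviation "pmul \<equiv> gmul tadd sadd alpha"

lemma padd_B: "x\<in>B \<Longrightarrow> y\<in>B \<Longrightarrow> padd x y \<in> B"
  by (auto simp: gadd_def)
lemma pmul_B: "x\<in>B \<Longrightarrow> y\<in>B \<Longrightarrow> pmul x y \<in> B"
  by (auto simp: gmul_def)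

lemma padd_assoc: "x\<in>B \<Longrightarrow> y\<in>B \<Longrightarrow> z\<in>B \<Longrightarrow> padd (padd x y) z = padd x (padd y z)"
  by (auto simp: gadd_def bf_add bf_add2 ac_simps)
lemma padd_comm: "x\<in>B \<Longrightarrow> y\<in>B \<Longrightarrow> padd x y = padd y x"
  by (auto simp: gadd_def ac_simps bf_sym)
lemma padd_one: "x\<in>B \<Longrightarrow> padd (tzero,szero) x = x \<and> padd x (tzero,szero) = x"
  by (auto simp: gadd_def)
definition "ainv x = (tneg (fst x), sadd (sneg (snd x)) (bf (fst x) (fst x)))"
lemma ainv_B: "x\<in>B \<Longrightarrow> ainv x \<in> B" by (auto simp: ainv_def)
lemma ainv_l: "x\<in>B \<Longrightarrow> padd (ainv x) x = (tzero,szero)"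
proof -
  assume "x\<in>B"
  then obtain t s where x: "x = (t,s)" "t\<in>T" "s\<in>S" by auto
  have "sadd (sadd (sadd (sneg s) (bf t t)) s) (bf (tneg t) t) =
        sadd (sadd s (sneg s)) (sadd (bf t t) (sneg (bf t t)))"
    using x by (simp add: bf_neg_l ac_simps)
  also have "\<dots> = szero" using x by simp
  finally show ?thesis using x by (simp add: gadd_def ainv_def)
qed

definition "minv x = (tneg (alpha (sneg (snd x)) (fst x)), sneg (snd x))"
lemma minv_B: "x\<in>B \<Longrightarrow> minv x \<in> B" by (auto simp: minv_def)
lemma minv_l: "x\<in>B \<Longrightarrow> pmul (minv x) x = (tzero,szero)"
  by (auto simp: gmul_def minv_def)
lemma pmul_assoc: "x\<in>B \<Longrightarrow> y\<in>B \<Longrightarrow> z\<in>B \<Longrightarrow> pmul (pmul x y) z = pmul x (pmul y z)"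
  by (auto simp: gmul_def alpha_add alpha_comp ac_simps)
lemma pmul_one: "x\<in>B \<Longrightarrow> pmul (tzero,szero) x = x \<and> pmul x (tzero,szero) = x"
  by (auto simp: gmul_def)

lemma add_group: "comm_group (grp_of B padd)"
  apply (rule grp_of_comm_group[where e="(tzero,szero)"])
  subgoal by (rule padd_B)
  subgoal by (rule padd_assoc)
  subgoal by (rule padd_comm)
  subgoal by simp
  subgoal by (rule padd_one)
  subgoal for x using ainv_B ainv_l by blast
  done
lemma mul_group: "group (grp_of B pmul)"
  apply (rule grp_of_group[where e="(tzero,szero)"])
  subgoal by (rule pmul_B)
  subgoal by (rule pmul_assoc)
  subgoal by simp
  subgoal by (rule pmul_one)
  subgoal for x using minv_B minv_l by blast
  done
lemma add_one[simp]: "one (grp_of B padd) = (tzero,szero)"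
  by (rule grp_of_one) (use padd_one in auto)
lemma mul_one[simp]: "one (grp_of B pmul) = (tzero,szero)"
  by (rule grp_of_one) (use pmul_one in auto)
lemma add_inv[simp]: "x\<in>B \<Longrightarrow> inv\<^bsub>grp_of B padd\<^esub> x = ainv x"
  using group.inv_equality[OF comm_group.axioms(2)[OF add_group], of "ainv x" x]
  by (simp add: ainv_l ainv_B)
lemma mul_inv[simp]: "x\<in>B \<Longrightarrow> inv\<^bsub>grp_of B pmul\<^esub> x = minv x"
  using group.inv_equality[OF mul_group, of "minv x" x]
  by (simp add: minv_l minv_B)

lemma brace_eq: assumes "a\<in>B" "x\<in>B" "y\<in>B"
  shows "padd (pmul a (padd x y)) a = padd (pmul a x) (pmul a y)"
proof -
  obtain t s t1 s1 t2 s2 where v: "a=(t,s)" "x=(t1,s1)" "y=(t2,s2)" "t\<in>T" "s\<in>S" "t1\<in>T" "s1\<in>S" "t2\<in>T" "s2\<in>S"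
    using assms by auto
  have e1: "bf (tadd t (alpha s (tadd t1 t2))) t = sadd (bf t t) (sadd (bf (alpha s t1) t) (bf (alpha s t2) t))"
    using v by (simp add: alpha_add bf_add)
  have e2: "bf (tadd t (alpha s t1)) (tadd t (alpha s t2)) =
      sadd (sadd (bf t t) (bf t (alpha s t2))) (sadd (bf (alpha s t1) t) (bf t1 t2))"
    using v by (simp add: bf_add bf_add2 ac_simps)
  have e3: "bf t (alpha s t2) = bf (alpha s t2) t" using v by (simp add: bf_sym)
  show ?thesis using v
    by (simp add: gmul_def gadd_def alpha_add bf_add bf_add2 e3 ac_simps)
qed

lemma is_brace: "is_left_brace B padd pmul"
  unfolding is_left_brace_def using add_group mul_group brace_eq by auto

lemma lam_eq: assumes "a\<in>B" "x\<in>B"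
  shows "brace_lambda B padd pmul a x = (alpha (snd a) (fst x), sadd (snd x) (sneg (bf (alpha (snd a) (fst x)) (fst a))))"
proof -
  obtain ta sa tx sx where v: "a=(ta,sa)" "x=(tx,sx)" "ta\<in>T" "sa\<in>S" "tx\<in>T" "sx\<in>S"
    using assms by auto
  have e1: "bf (tadd ta (alpha sa tx)) (tneg ta) = sadd (sneg (bf ta ta)) (sneg (bf (alpha sa tx) ta))"
    using v by (simp add: bf_add bf_neg_r sneg_add)
  have "sadd (sadd (sadd sa sx) (sadd (sneg sa) (bf ta ta))) (sadd (sneg (bf ta ta)) (sneg (bf (alpha sa tx) ta)))
      = sadd (sadd sa (sneg sa)) (sadd (sadd (bf ta ta) (sneg (bf ta ta))) (sadd sx (sneg (bf (alpha sa tx) ta))))"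
    by (simp add: ac_simps)
  also have "\<dots> = sadd sx (sneg (bf (alpha sa tx) ta))" using v by simp
  finally have e2: "sadd (sadd (sadd sa sx) (sadd (sneg sa) (bf ta ta))) (sadd (sneg (bf ta ta)) (sneg (bf (alpha sa tx) ta)))
      = sadd sx (sneg (bf (alpha sa tx) ta))" .
  have e3: "tadd (tadd ta (alpha sa tx)) (tneg ta) = alpha sa tx"
  proof -
    have "tadd (tadd ta (alpha sa tx)) (tneg ta) = tadd (tadd ta (tneg ta)) (alpha sa tx)" by (simp add: ac_simps)
    then show ?thesis using v by simp
  qed
  show ?thesis using v
    by (simp add: brace_lambda_def gmul_def gadd_def ainv_def e1 e2 e3)
qed


lemma ideal_W:
  assumes W: "W \<subseteq> T" "tzero \<in> W" "\<And>w w'. w\<in>W \<Longrightarrow> w'\<in>W \<Longrightarrow> tadd w w' \<in> W"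
    "\<And>w. w\<in>W \<Longrightarrow> tneg w \<in> W"
    "\<And>s w. s\<in>S \<Longrightarrow> w\<in>W \<Longrightarrow> alpha s w \<in> W"
    "\<And>s t. s\<in>S \<Longrightarrow> t\<in>T \<Longrightarrow> tadd t (tneg (alpha s t)) \<in> W"
  shows "is_brace_ideal B padd pmul (W \<times> S)"
proof -
  have WS: "W \<times> S \<subseteq> B" using W(1) by auto
  have sub1: "subgroup (W\<times>S) (grp_of B padd)"
    apply (rule group.subgroupI[OF comm_group.axioms(2)[OF add_group]])
    subgoal using WS by simp
    subgoal by (metis W(2) szero_S SigmaI empty_iff)
    using W WS by (auto simp: ainv_def gadd_def subset_iff)
  have sub2: "subgroup (W\<times>S) (grp_of B pmul)"
    apply (rule group.subgroupI[OF mul_group])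
    subgoal using WS by simp
    subgoal by (metis W(2) szero_S SigmaI empty_iff)
    using W WS by (auto simp: minv_def gmul_def subset_iff)
  have lid: "is_left_ideal B padd pmul (W\<times>S)"
    unfolding is_left_ideal_def using sub1 lam_eq W WS by (auto simp: subset_iff)
  have conj: "pmul (pmul g h) (minv g) \<in> W\<times>S" if g: "g\<in>B" and h: "h\<in>W\<times>S" for g h
  proof -
    obtain t s w s' where v: "g=(t,s)" "h=(w,s')" "t\<in>T" "s\<in>S" "w\<in>W" "s'\<in>S" using g h by auto
    have wT: "w\<in>T" using v W(1) by auto
    have a1: "alpha (sadd s s') (tneg (alpha (sneg s) t)) = alpha s' (tneg t)"
      using v by (simp add: sa.commute[of s s'] alpha_comp alpha_neg)
    have "tadd (tadd t (alpha s w)) (alpha s' (tneg t)) = tadd (alpha s w) (tadd t (tneg (alpha s' t)))"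
      using v by (simp add: alpha_neg ac_simps)
    moreover have "\<dots> \<in> W" using v W by auto
    ultimately show ?thesis using v wT by (simp add: gmul_def minv_def a1)
  qed
  have nor: "normal (W\<times>S) (grp_of B pmul)"
    apply (subst group.normal_inv_iff[OF mul_group])
    using sub2 conj by (auto simp: subset_iff)
  show ?thesis unfolding is_brace_ideal_def using lid nor by auto
qed

lemma not_simple:
  assumes W: "W \<subseteq> T" "tzero \<in> W" "\<And>w w'. w\<in>W \<Longrightarrow> w'\<in>W \<Longrightarrow> tadd w w' \<in> W"
    "\<And>w. w\<in>W \<Longrightarrow> tneg w \<in> W"
    "\<And>s w. s\<in>S \<Longrightarrow> w\<in>W \<Longrightarrow> alpha s w \<in> W"
    "\<And>s t. s\<in>S \<Longrightarrow> t\<in>T \<Longrightarrow> tadd t (tneg (alpha s t)) \<in> W"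
    and ne: "W \<noteq> T" and s0: "s0 \<in> S" "s0 \<noteq> szero"
  shows "\<not> is_simple_left_brace B padd pmul"
proof
  assume sim: "is_simple_left_brace B padd pmul"
  have id: "is_brace_ideal B padd pmul (W \<times> S)" by (rule ideal_W[OF W])
  have "W \<times> S = {(tzero,szero)} \<or> W \<times> S = B" using sim id unfolding is_simple_left_brace_def by auto
  moreover have "(tzero, s0) \<in> W \<times> S" using W s0 by auto
  moreover obtain t where "t\<in>T" "t\<notin>W" using ne W(1) by auto
  moreover then have "(t, szero) \<in> B" "(t, szero) \<notin> W\<times>S" by auto
  ultimately show False using s0 by auto
qed

lemma B_nontriv: "s0 \<in> S \<Longrightarrow> s0 \<noteq> szero \<Longrightarrow> B \<noteq> {(tzero,szero)}"
  by auto

context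
  fixes I assumes I: "is_brace_ideal B padd pmul I"
begin
lemma I_sub1: "subgroup I (grp_of B padd)" using I unfolding is_brace_ideal_def is_left_ideal_def by auto
lemma I_B: "I \<subseteq> B" using subgroup.subset[OF I_sub1] by simp
lemma I_zero: "(tzero,szero) \<in> I" using subgroup.one_closed[OF I_sub1] by simp
lemma I_add: "x\<in>I \<Longrightarrow> y\<in>I \<Longrightarrow> padd x y \<in> I" using subgroup.m_closed[OF I_sub1] by simp
lemma I_inv: "x\<in>I \<Longrightarrow> ainv x \<in> I" by (metis I_sub1 add_inv subgroup.m_inv_closed subsetD I_B)
lemma I_lam: "a\<in>B \<Longrightarrow> x\<in>I \<Longrightarrow> brace_lambda B padd pmul a x \<in> I"
  using I unfolding is_brace_ideal_def is_left_ideal_def by auto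
lemma I_conj: "g\<in>B \<Longrightarrow> x\<in>I \<Longrightarrow> pmul (pmul g x) (minv g) \<in> I"
proof -
  assume a: "g\<in>B" "x\<in>I"
  have "normal I (grp_of B pmul)" using I unfolding is_brace_ideal_def by auto
  then have "\<forall>g\<in>B. \<forall>h\<in>I. pmul (pmul g h) (inv\<^bsub>grp_of B pmul\<^esub> g) \<in> I"
    using group.normal_inv_iff[OF mul_group] by auto
  then show ?thesis using a by auto
qed

lemma I_A: assumes x: "x\<in>I" and t: "t\<in>T" shows "(tzero, bf (fst x) t) \<in> I"
proof -
  obtain t' s' where v: "x=(t',s')" "t'\<in>T" "s'\<in>S" using x I_B by auto
  have l: "brace_lambda B padd pmul (tneg t, szero) x = (t', sadd s' (bf t' t))"
    using v t by (simp add: lam_eq bf_neg_r)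
  have "padd (t', sadd s' (bf t' t)) (ainv x) \<in> I"
    using I_add I_lam I_inv x t l by (metis mem_Sigma_iff szero_S tneg_T)
  moreover have "sadd (sadd (sadd s' (bf t' t)) (sadd (sneg s') (bf t' t'))) (bf t' (tneg t'))
     = sadd (sadd s' (sneg s')) (sadd (sadd (bf t' t') (sneg (bf t' t'))) (bf t' t))"
    using v by (simp only: bf_neg_r[OF v(2) v(2)] ac_simps)
  moreover have "\<dots> = bf t' t" using v t by simp
  ultimately have "sadd (sadd (sadd s' (bf t' t)) (sadd (sneg s') (bf t' t'))) (bf t' (tneg t')) = bf t' t"
    by simp
  then have "padd (t', sadd s' (bf t' t)) (ainv x) = (tzero, bf t' t)"
    by (simp only: gadd_def ainv_def v fst_conv snd_conv tneg_r[OF v(2)])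
  then show ?thesis using \<open>padd (t', sadd s' (bf t' t)) (ainv x) \<in> I\<close> v by simp
qed

lemma I_Bc: assumes "(tzero, s) \<in> I" "t\<in>T" shows "(tadd t (tneg (alpha s t)), s) \<in> I"
proof -
  have s: "s\<in>S" using assms I_B by auto
  have "pmul (pmul (t,szero) (tzero,s)) (minv (t,szero)) \<in> I" using I_conj assms by auto
  then show ?thesis using s assms by (simp add: gmul_def minv_def alpha_neg)
qed

lemma I_J: assumes "(tzero, s) \<in> I" "(tzero, s') \<in> I" shows "(tzero, sadd s s') \<in> I"
proof -
  have "s\<in>S" "s'\<in>S" using assms I_B by auto
  then show ?thesis using I_add[OF assms] by (simp add: gadd_def)
qed

lemma I_U: "(t, s) \<in> I \<Longrightarrow> (t', s') \<in> I \<Longrightarrow> \<exists>\<sigma>. (tadd t t', \<sigma>) \<in> I"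
  using I_add[of "(t,s)" "(t',s')"] by (auto simp: gadd_def)

lemma I_D: assumes "\<forall>s\<in>S. (tzero,s)\<in>I" "\<forall>t\<in>T. \<exists>s. (t,s)\<in>I" shows "I = B"
proof
  show "I \<subseteq> B" by (rule I_B)
  show "B \<subseteq> I"
  proof
    fix x assume "x \<in> B"
    then obtain t s where v: "x=(t,s)" "t\<in>T" "s\<in>S" by auto
    obtain s0 where s0: "(t,s0)\<in>I" using assms v by auto
    have s0S: "s0\<in>S" using s0 I_B by auto
    have "padd (t,s0) (tzero, sadd s (sneg s0)) \<in> I" using I_add assms s0 v s0S by auto
    moreover have "sadd s0 (sadd s (sneg s0)) = s" using s0S v
      by (metis sa.left_commute sneg_r szero_r)
    ultimately show "x\<in>I" using v by (simp add: gadd_def)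
  qed
qed
end

end


definition vneg :: "nat \<Rightarrow> nat \<Rightarrow> vec \<Rightarrow> vec" where
  "vneg p d u = (\<lambda>k. if k < d then (- u k) mod int p else 0)"

lemma vadd_assoc: "vadd p d (vadd p d u v) w = vadd p d u (vadd p d v w)"
  by (rule ext) (simp add: vadd_def mod_add_left_eq mod_add_right_eq add.assoc)
lemma vadd_comm: "vadd p d u v = vadd p d v u"
  by (rule ext) (simp add: vadd_def add.commute)
lemma vsub_eq: "vsub p d u v = vadd p d u (vneg p d v)"
  by (rule ext) (simp add: vsub_def vadd_def vneg_def mod_add_right_eq)

lemma Vsp_iff: "v \<in> Vsp p d \<longleftrightarrow> (\<forall>k. 0 \<le> v k \<and> v k < int p \<and> (d \<le> k \<longrightarrow> v k = 0))"
  by (simp add: Vsp_def)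

lemma vzero_V[simp]: "0 < p \<Longrightarrow> vzero \<in> Vsp p d" by (simp add: Vsp_def vzero_def)
lemma vadd_V[simp]: "0 < p \<Longrightarrow> vadd p d u v \<in> Vsp p d" by (simp add: Vsp_def vadd_def)
lemma vneg_V[simp]: "0 < p \<Longrightarrow> vneg p d u \<in> Vsp p d" by (simp add: Vsp_def vneg_def)
lemma vsub_V[simp]: "0 < p \<Longrightarrow> vsub p d u v \<in> Vsp p d" by (simp add: Vsp_def vsub_def)

lemma vzero_l[simp]: "u \<in> Vsp p d \<Longrightarrow> vadd p d vzero u = u"
  by (rule ext) (auto simp: Vsp_def vadd_def vzero_def not_less)
lemma vzero_r[simp]: "u \<in> Vsp p d \<Longrightarrow> vadd p d u vzero = u"
  by (metis vadd_comm vzero_l)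
lemma vneg_r[simp]: "u \<in> Vsp p d \<Longrightarrow> vadd p d u (vneg p d u) = vzero"
  by (rule ext) (auto simp: Vsp_def vadd_def vzero_def vneg_def mod_add_right_eq)

definition tzero :: tcomp where "tzero = (\<lambda>z i j. vzero)"
definition szero :: scomp where "szero = (\<lambda>z i. 0)"
definition AP_tneg :: "nat \<Rightarrow> (nat \<Rightarrow> nat) \<Rightarrow> (nat \<Rightarrow> nat) \<Rightarrow> (nat \<Rightarrow> nat) \<Rightarrow> tcomp \<Rightarrow> tcomp" where
  "AP_tneg n p r d t = (\<lambda>z i j. if z < n \<and> i < r z \<and> j < r (cprev n z)
      then vneg (p z) (d z) (t z i j) else vzero)"
definition AP_sneg :: "nat \<Rightarrow> (nat \<Rightarrow> nat) \<Rightarrow> (nat \<Rightarrow> nat) \<Rightarrow> scomp \<Rightarrow> scomp" where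
  "AP_sneg n p r s = (\<lambda>z i. if z < n \<and> i < r z then (- s z i) mod int (p z) else 0)"

lemma cprev_lt: "0 < n \<Longrightarrow> cprev n z < n" by (simp add: cprev_def)

locale setting =
  fixes n :: nat and p r d :: "nat \<Rightarrow> nat"
    and b :: "nat \<Rightarrow> vec \<Rightarrow> vec \<Rightarrow> int" and f :: "nat \<Rightarrow> vec \<Rightarrow> vec"
  assumes n1: "1 < n"
    and pp: "\<forall>z<n. prime (p z)"
    and pd: "\<forall>z<n. \<forall>z'<n. z \<noteq> z' \<longrightarrow> p z \<noteq> p z'"
    and rpos: "\<forall>z<n. 0 < r z"
    and bns: "\<forall>z<n. nonsing_sym_form (p z) (d z) (b z)"
    and forth: "\<forall>z<n. f z \<in> orth_grp (p z) (d z) (b z)"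
    and ford: "\<forall>z<n. has_order_on (Vsp (p z) (d z)) (f z) (p (cprev n z))"
begin

abbreviation "V z \<equiv> Vsp (p z) (d z)"
abbreviation "TT \<equiv> AP_T n p r d"
abbreviation "SS \<equiv> AP_S n p r"

lemma ppos: "z < n \<Longrightarrow> 0 < p z" using pp prime_gt_0_nat by blast
lemma pgt1: "z < n \<Longrightarrow> 1 < p z" using pp prime_gt_1_nat by blast
lemma cp: "cprev n z < n" using n1 cprev_lt by simp

lemma TT_iff: "t \<in> TT \<longleftrightarrow> (\<forall>z i j. if z < n \<and> i < r z \<and> j < r (cprev n z)
      then t z i j \<in> V z else t z i j = vzero)" by (simp add: AP_T_def)
lemma SS_iff: "s \<in> SS \<longleftrightarrow> (\<forall>z i. if z < n \<and> i < r z
      then 0 \<le> s z i \<and> s z i < int (p z) else s z i = 0)" by (simp add: AP_S_def)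

lemma TT_in: "t \<in> TT \<Longrightarrow> z < n \<Longrightarrow> i < r z \<Longrightarrow> j < r (cprev n z) \<Longrightarrow> t z i j \<in> V z"
  by (simp add: TT_iff)
lemma TT_out: "t \<in> TT \<Longrightarrow> \<not> (z < n \<and> i < r z \<and> j < r (cprev n z)) \<Longrightarrow> t z i j = vzero"
  by (simp add: TT_iff)
lemma SS_in: "s \<in> SS \<Longrightarrow> z < n \<Longrightarrow> i < r z \<Longrightarrow> 0 \<le> s z i \<and> s z i < int (p z)"
  by (simp add: SS_iff)
lemma SS_out: "s \<in> SS \<Longrightarrow> \<not> (z < n \<and> i < r z) \<Longrightarrow> s z i = 0"
  by (simp add: SS_iff)

lemma TT_ext: "t \<in> TT \<Longrightarrow> t' \<in> TT \<Longrightarrow> (\<And>z i j. z < n \<Longrightarrow> i < r z \<Longrightarrow> j < r (cprev n z) \<Longrightarrow> t z i j = t' z i j) \<Longrightarrow> t = t'"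
  by (intro ext) (metis TT_out)
lemma SS_ext: "s \<in> SS \<Longrightarrow> s' \<in> SS \<Longrightarrow> (\<And>z i. z < n \<Longrightarrow> i < r z \<Longrightarrow> s z i = s' z i) \<Longrightarrow> s = s'"
  by (intro ext) (metis SS_out)

lemma b_range: "z<n \<Longrightarrow> u \<in> V z \<Longrightarrow> v \<in> V z \<Longrightarrow> 0 \<le> b z u v \<and> b z u v < int (p z)"
  using bns unfolding nonsing_sym_form_def by blast
lemma b_sym: "z<n \<Longrightarrow> u \<in> V z \<Longrightarrow> v \<in> V z \<Longrightarrow> b z u v = b z v u"
  using bns unfolding nonsing_sym_form_def by blast
lemma b_add: "z<n \<Longrightarrow> u \<in> V z \<Longrightarrow> v \<in> V z \<Longrightarrow> w \<in> V z \<Longrightarrow> b z (vadd (p z) (d z) u v) w = (b z u w + b z v w) mod int (p z)"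
  using bns unfolding nonsing_sym_form_def by blast
lemma b_nondeg: "z<n \<Longrightarrow> u \<in> V z \<Longrightarrow> u \<noteq> vzero \<Longrightarrow> \<exists>v\<in>V z. b z u v \<noteq> 0"
  using bns unfolding nonsing_sym_form_def by blast

lemma f_bij: "z<n \<Longrightarrow> bij_betw (f z) (V z) (V z)" using forth unfolding orth_grp_def by blast
lemma f_V: "z<n \<Longrightarrow> u \<in> V z \<Longrightarrow> f z u \<in> V z" using f_bij bij_betwE by blast
lemma f_add: "z<n \<Longrightarrow> u \<in> V z \<Longrightarrow> v \<in> V z \<Longrightarrow> f z (vadd (p z) (d z) u v) = vadd (p z) (d z) (f z u) (f z v)"
  using forth unfolding orth_grp_def by blast
lemma f_b: "z<n \<Longrightarrow> u \<in> V z \<Longrightarrow> v \<in> V z \<Longrightarrow> b z (f z u) (f z v) = b z u v"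
  using forth unfolding orth_grp_def by blast
lemma fk_V: "z<n \<Longrightarrow> u \<in> V z \<Longrightarrow> (f z ^^ k) u \<in> V z"
  by (induction k) (auto simp: f_V)
lemma fk_add: "z<n \<Longrightarrow> u \<in> V z \<Longrightarrow> v \<in> V z \<Longrightarrow> (f z ^^ k) (vadd (p z) (d z) u v) = vadd (p z) (d z) ((f z ^^ k) u) ((f z ^^ k) v)"
  by (induction k) (auto simp: f_add fk_V)
lemma fk_b: "z<n \<Longrightarrow> u \<in> V z \<Longrightarrow> v \<in> V z \<Longrightarrow> b z ((f z ^^ k) u) ((f z ^^ k) v) = b z u v"
  by (induction k) (auto simp: f_b fk_V)
lemma f_period: "z<n \<Longrightarrow> u \<in> V z \<Longrightarrow> (f z ^^ p (cprev n z)) u = u"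
  using ford unfolding has_order_on_def by blast
lemma fk_mod: "z<n \<Longrightarrow> u \<in> V z \<Longrightarrow> (f z ^^ k) u = (f z ^^ (k mod p (cprev n z))) u"
proof (induction k rule: nat_less_induct)
  case (1 k)
  let ?q = "p (cprev n z)"
  show ?case
  proof (cases "k < ?q")
    case True then show ?thesis by simp
  next
    case False
    then obtain m where k: "k = m + ?q" by (metis add.commute le_Suc_ex not_less)
    have q0: "0 < ?q" using ppos cp by blast
    have "(f z ^^ k) u = (f z ^^ m) ((f z ^^ ?q) u)" by (simp add: k funpow_add)
    also have "\<dots> = (f z ^^ m) u" using 1 f_period by simp
    also have "\<dots> = (f z ^^ (m mod ?q)) u" using 1 k q0 by simp
    finally show ?thesis by (simp add: k)
  qed
qed


lemma cpv: "z < n \<Longrightarrow> j < r (cprev n z) \<Longrightarrow> True" by simp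

lemma tadd_TT[simp]: "AP_tadd n p r d t t' \<in> TT"
  by (auto simp: AP_T_def AP_tadd_def ppos)
lemma tneg_TT[simp]: "AP_tneg n p r d t \<in> TT"
  by (auto simp: AP_T_def AP_tneg_def ppos)
lemma tzero_TT[simp]: "tzero \<in> TT"
  by (auto simp: AP_T_def tzero_def ppos)
lemma sadd_SS[simp]: "AP_sadd n p r s s' \<in> SS"
  by (auto simp: AP_S_def AP_sadd_def ppos)
lemma sneg_SS[simp]: "AP_sneg n p r s \<in> SS"
  by (auto simp: AP_S_def AP_sneg_def ppos)
lemma szero_SS[simp]: "szero \<in> SS"
  by (auto simp: AP_S_def szero_def ppos)

lemma tac: "abel_semigroup (AP_tadd n p r d)"
proof
  fix a b c show "AP_tadd n p r d (AP_tadd n p r d a b) c = AP_tadd n p r d a (AP_tadd n p r d b c)"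
    by (intro ext) (simp add: AP_tadd_def vadd_assoc)
  show "AP_tadd n p r d a b = AP_tadd n p r d b a"
    by (intro ext) (simp add: AP_tadd_def vadd_comm)
qed
lemma sac: "abel_semigroup (AP_sadd n p r)"
proof
  fix a b c show "AP_sadd n p r (AP_sadd n p r a b) c = AP_sadd n p r a (AP_sadd n p r b c)"
    by (intro ext) (simp add: AP_sadd_def mod_add_left_eq mod_add_right_eq add.assoc)
  show "AP_sadd n p r a b = AP_sadd n p r b a"
    by (intro ext) (simp add: AP_sadd_def add.commute)
qed

lemma tzero_l: "t \<in> TT \<Longrightarrow> AP_tadd n p r d tzero t = t"
  unfolding AP_tadd_def tzero_def by (intro ext) (auto simp: TT_in TT_out)
lemma tneg_r: "t \<in> TT \<Longrightarrow> AP_tadd n p r d t (AP_tneg n p r d t) = tzero"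
  unfolding AP_tadd_def tzero_def AP_tneg_def by (intro ext) (auto simp: TT_in TT_out)
lemma szero_l: "s \<in> SS \<Longrightarrow> AP_sadd n p r szero s = s"
  unfolding AP_sadd_def szero_def by (intro ext) (auto simp: SS_in SS_out)
lemma sneg_r: "s \<in> SS \<Longrightarrow> AP_sadd n p r s (AP_sneg n p r s) = szero"
  unfolding AP_sadd_def szero_def AP_sneg_def by (intro ext) (auto simp: mod_add_right_eq)

lemma bf_SS[simp]: "AP_b n p r b t t' \<in> SS"
  by (auto simp: AP_S_def AP_b_def ppos)

lemma bf_sym: "t \<in> TT \<Longrightarrow> t' \<in> TT \<Longrightarrow> AP_b n p r b t t' = AP_b n p r b t' t"
  unfolding AP_b_def by (intro ext) (auto intro!: arg_cong[where f="\<lambda>x. x mod _"] sum.cong b_sym TT_in)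

lemma bf_add: assumes "t \<in> TT" "t' \<in> TT" "t'' \<in> TT"
  shows "AP_b n p r b (AP_tadd n p r d t t') t'' = AP_sadd n p r (AP_b n p r b t t'') (AP_b n p r b t' t'')"
proof (intro ext)
  fix z i
  show "AP_b n p r b (AP_tadd n p r d t t') t'' z i = AP_sadd n p r (AP_b n p r b t t'') (AP_b n p r b t' t'') z i"
  proof (cases "z < n \<and> i < r z")
    case True
    let ?R = "r (cprev n z)" and ?p = "int (p z)"
    have "(\<Sum>j<?R. b z (AP_tadd n p r d t t' z i j) (t'' z i j)) = (\<Sum>j<?R. (b z (t z i j) (t'' z i j) + b z (t' z i j) (t'' z i j)) mod ?p)"
      using True assms by (intro sum.cong) (auto simp: AP_tadd_def b_add TT_in)
    then have "(\<Sum>j<?R. b z (AP_tadd n p r d t t' z i j) (t'' z i j)) mod ?p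
       = ((\<Sum>j<?R. b z (t z i j) (t'' z i j)) mod ?p + (\<Sum>j<?R. b z (t' z i j) (t'' z i j)) mod ?p) mod ?p"
      by (simp add: mod_sum_eq sum.distrib mod_add_eq)
    then show ?thesis using True by (auto simp: AP_b_def AP_sadd_def)
  next
    case False then show ?thesis by (auto simp: AP_b_def AP_sadd_def)
  qed
qed

lemma alpha_TT[simp]: "t \<in> TT \<Longrightarrow> AP_alpha n p r f s t \<in> TT"
  by (auto simp: AP_T_def AP_alpha_def ppos fk_V TT_in)

lemma alpha_add: "t \<in> TT \<Longrightarrow> t' \<in> TT \<Longrightarrow> AP_alpha n p r f s (AP_tadd n p r d t t') = AP_tadd n p r d (AP_alpha n p r f s t) (AP_alpha n p r f s t')"
  unfolding AP_alpha_def AP_tadd_def by (intro ext) (auto simp: fk_add TT_in)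

lemma alpha_zero: "t \<in> TT \<Longrightarrow> AP_alpha n p r f szero t = t"
  unfolding AP_alpha_def szero_def by (intro ext) (auto simp: TT_out)

lemma fk_comp: assumes "z<n" "u \<in> V z" "0 \<le> a" "a < int (p (cprev n z))" "0 \<le> a'" "a' < int (p (cprev n z))"
  shows "(f z ^^ nat ((a + a') mod int (p (cprev n z)))) u = (f z ^^ nat a) ((f z ^^ nat a') u)"
proof -
  let ?q = "p (cprev n z)"
  have "(f z ^^ nat a) ((f z ^^ nat a') u) = (f z ^^ (nat a + nat a')) u" by (simp add: funpow_add)
  also have "\<dots> = (f z ^^ ((nat a + nat a') mod ?q)) u" using fk_mod assms by blast
  also have "(nat a + nat a') mod ?q = nat ((a + a') mod int ?q)"
    using assms by (simp add: nat_mod_distrib nat_add_distrib)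
  finally show ?thesis by simp
qed

lemma alpha_comp: assumes "s \<in> SS" "s' \<in> SS" "t \<in> TT"
  shows "AP_alpha n p r f (AP_sadd n p r s s') t = AP_alpha n p r f s (AP_alpha n p r f s' t)"
proof (rule ext, rule ext, rule ext)
  fix z i j
  show "AP_alpha n p r f (AP_sadd n p r s s') t z i j = AP_alpha n p r f s (AP_alpha n p r f s' t) z i j"
  proof (cases "z < n \<and> i < r z \<and> j < r (cprev n z)")
    case True
    then show ?thesis using assms cp[of z] SS_in[OF assms(1) cp[of z], of j] SS_in[OF assms(2) cp[of z], of j]
      by (auto simp: AP_alpha_def AP_sadd_def fk_comp TT_in)
  next
    case False then show ?thesis by (auto simp: AP_alpha_def)
  qed
qed

lemma bf_alpha: "t \<in> TT \<Longrightarrow> t' \<in> TT \<Longrightarrow> AP_b n p r b (AP_alpha n p r f s t) (AP_alpha n p r f s t') = AP_b n p r b t t'"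
  unfolding AP_b_def AP_alpha_def by (intro ext) (auto intro!: arg_cong[where f="\<lambda>x. x mod _"] sum.cong fk_b TT_in)

sublocale ap: aprod TT "AP_tadd n p r d" tzero "AP_tneg n p r d" SS "AP_sadd n p r" szero "AP_sneg n p r"
   "AP_b n p r b" "AP_alpha n p r f"
  by (rule aprod.intro) (auto simp: tac sac tzero_l tneg_r szero_l sneg_r bf_add alpha_add alpha_zero alpha_comp bf_alpha intro: bf_sym)

lemma add_eq: "AP_add n p r d b = gadd (AP_tadd n p r d) (AP_sadd n p r) (AP_b n p r b)"
  by (intro ext) (simp add: AP_add_def gadd_def)
lemma mul_eq: "AP_mul n p r d f = gmul (AP_tadd n p r d) (AP_sadd n p r) (AP_alpha n p r f)"
  by (intro ext) (simp add: AP_mul_def gmul_def)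
lemma car_eq: "AP_carrier n p r d = TT \<times> SS" by (simp add: AP_carrier_def)

end


lemma vneg_vzero[simp]: "vneg p d vzero = vzero" by (rule ext) (simp add: vneg_def vzero_def)
lemma vadd_vzero_vzero[simp]: "vadd p d vzero vzero = vzero" by (rule ext) (simp add: vadd_def vzero_def)
lemma vsub_self[simp]: "vsub p d u u = vzero" by (rule ext) (simp add: vsub_def vzero_def)
lemma m1: "((a+b) mod m - (c+e) mod m) mod m = ((a-c) mod m + (b-e) mod m) mod (m::int)"
proof -
  have "(a+b) - (c+e) = (a-c)+(b-e)" by simp
  then show ?thesis by (simp only: mod_add_eq mod_diff_eq)
qed
lemma m2: "(a - c) mod m = ((a - e) mod m + (e - c) mod m) mod (m::int)"
proof -
  have "a - c = (a - e) + (e - c)" by simp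
  then show ?thesis by (simp only: mod_add_eq)
qed
lemma m3: "((- a) mod m - (- c) mod m) mod m = (- ((a - c) mod m)) mod (m::int)"
proof -
  have "(- a) - (- c) = - (a - c)" by simp
  then show ?thesis by (simp only: mod_diff_eq mod_minus_eq)
qed
lemma m4: "(- ((w - u) mod m)) mod m = (u - w) mod (m::int)"
proof -
  have "- (w - u) = u - w" by simp
  then show ?thesis by (simp only: mod_minus_eq)
qed

lemma vsub_vadd: "vsub p d (vadd p d a b) (vadd p d c e) = vadd p d (vsub p d a c) (vsub p d b e)"
  by (rule ext) (simp add: vsub_def vadd_def m1)
lemma vsub_vneg: "vsub p d (vneg p d a) (vneg p d c) = vneg p d (vsub p d a c)"
  by (rule ext) (simp add: vsub_def vneg_def m3)
lemma vsub_trans: "vsub p d a c = vadd p d (vsub p d a e) (vsub p d e c)"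
proof (rule ext)
  fix k show "vsub p d a c k = vadd p d (vsub p d a e) (vsub p d e c) k"
    using m2[of "a k" "c k" "int p" "e k"] by (simp add: vsub_def vadd_def)
qed
lemma vneg_vsub: "vneg p d (vsub p d w u) = vsub p d u w"
  by (rule ext) (simp add: vsub_def vneg_def m4)
lemma vneg_l[simp]: "u \<in> Vsp p d \<Longrightarrow> vadd p d (vneg p d u) u = vzero"
  by (metis vadd_comm vneg_r)
lemma vneg_vneg[simp]: "u \<in> Vsp p d \<Longrightarrow> vneg p d (vneg p d u) = u"
  by (rule ext) (auto simp: Vsp_def vneg_def mod_simps not_less)
lemma vsub_vzero[simp]: "u \<in> Vsp p d \<Longrightarrow> vsub p d u vzero = u"
  by (rule ext) (auto simp: Vsp_def vsub_def vzero_def not_less)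
lemma vcancel: assumes "0 < p" "a \<in> Vsp p d" "x \<in> Vsp p d" "y \<in> Vsp p d" "vadd p d a x = vadd p d a y"
  shows "x = y"
proof -
  have "vadd p d (vneg p d a) (vadd p d a x) = vadd p d (vneg p d a) (vadd p d a y)" using assms by simp
  then have "vadd p d (vadd p d (vneg p d a) a) x = vadd p d (vadd p d (vneg p d a) a) y" by (simp add: vadd_assoc)
  then show ?thesis using assms by simp
qed
lemma vsub_zero_iff: assumes "u \<in> Vsp p d" "v \<in> Vsp p d" shows "vsub p d u v = vzero \<longleftrightarrow> u = v"
proof
  assume h: "vsub p d u v = vzero"
  show "u = v"
  proof
    fix k
    show "u k = v k"
    proof (cases "k < d")
      case True
      then have "(u k - v k) mod int p = 0" using h unfolding vsub_def vzero_def by meson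
      then have "u k mod int p = v k mod int p" by (simp add: mod_eq_dvd_iff mod_eq_0_iff_dvd)
      then show ?thesis using assms by (simp add: Vsp_def)
    next
      case False then show ?thesis using assms by (simp add: Vsp_def)
    qed
  qed
qed simp

lemma Vsp_finite: "finite (Vsp p d)"
proof -
  have "Vsp p d \<subseteq> {v. \<forall>x. (x \<in> {..<d} \<longrightarrow> v x \<in> {0..<int p}) \<and> (x \<notin> {..<d} \<longrightarrow> v x = 0)}"
    by (auto simp: Vsp_def)
  then show ?thesis by (rule finite_subset) (rule finite_set_of_finite_funs; simp)
qed

context setting begin

lemma f_zero[simp]: "z<n \<Longrightarrow> f z vzero = vzero"
proof -
  assume z: "z<n"
  have "f z vzero = vadd (p z) (d z) (f z vzero) (f z vzero)"
    using f_add[OF z, of vzero vzero] z ppos by simp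
  then have "vadd (p z) (d z) (f z vzero) vzero = vadd (p z) (d z) (f z vzero) (f z vzero)"
    using z ppos f_V by simp
  then show ?thesis using vcancel z ppos f_V by (metis vzero_V)
qed
lemma fk_zero[simp]: "z<n \<Longrightarrow> (f z ^^ k) vzero = vzero" by (induction k) auto
lemma fk_neg: assumes "z<n" "u \<in> V z" shows "(f z ^^ k) (vneg (p z) (d z) u) = vneg (p z) (d z) ((f z ^^ k) u)"
proof -
  have "vadd (p z) (d z) ((f z ^^ k) u) ((f z ^^ k) (vneg (p z) (d z) u)) = vzero"
    using assms fk_add[OF assms(1) assms(2), of "vneg (p z) (d z) u" k] ppos by simp
  then have "vadd (p z) (d z) ((f z ^^ k) u) ((f z ^^ k) (vneg (p z) (d z) u)) =
     vadd (p z) (d z) ((f z ^^ k) u) (vneg (p z) (d z) ((f z ^^ k) u))" using assms fk_V by simp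
  then show ?thesis using vcancel assms ppos fk_V vneg_V by metis
qed
lemma fk_vsub: assumes "z<n" "u \<in> V z" "v \<in> V z"
  shows "(f z ^^ k) (vsub (p z) (d z) u v) = vsub (p z) (d z) ((f z ^^ k) u) ((f z ^^ k) v)"
  using assms by (simp add: vsub_eq fk_add fk_neg ppos)

lemma b_zero_r: assumes "z<n" "u \<in> V z" shows "b z u vzero = 0"
proof -
  have "b z vzero u = (b z vzero u + b z vzero u) mod int (p z)"
    using b_add[OF assms(1), of vzero vzero u] assms ppos by simp
  moreover have "0 \<le> b z vzero u" "b z vzero u < int (p z)" using b_range assms ppos by auto
  ultimately have "b z vzero u = 0"
  proof -
    let ?x = "b z vzero u"
    assume e: "?x = (?x + ?x) mod int (p z)" and r: "0 \<le> ?x" "?x < int (p z)"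
    have "?x mod int (p z) = ?x" using r by simp
    then have "(?x + ?x) mod int (p z) = ?x mod int (p z)" using e by simp
    then have "int (p z) dvd ?x" by (simp add: mod_eq_dvd_iff)
    then show "?x = 0" using r zdvd_imp_le by force
  qed
  then show ?thesis using b_sym assms ppos by (metis vzero_V)
qed

definition gmap :: "nat \<Rightarrow> vec \<Rightarrow> vec" where "gmap z u = vsub (p z) (d z) (f z u) u"

lemma gmap_add: "z<n \<Longrightarrow> u \<in> V z \<Longrightarrow> v \<in> V z \<Longrightarrow> gmap z (vadd (p z) (d z) u v) = vadd (p z) (d z) (gmap z u) (gmap z v)"
  by (simp add: gmap_def f_add vsub_vadd)
lemma f_neg: "z<n \<Longrightarrow> u \<in> V z \<Longrightarrow> f z (vneg (p z) (d z) u) = vneg (p z) (d z) (f z u)"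
  using fk_neg[of z u 1] by simp
lemma gmap_neg: "z<n \<Longrightarrow> u \<in> V z \<Longrightarrow> gmap z (vneg (p z) (d z) u) = vneg (p z) (d z) (gmap z u)"
  by (simp add: gmap_def f_neg vsub_vneg)
lemma fk_gmap: "z<n \<Longrightarrow> u \<in> V z \<Longrightarrow> (f z ^^ k) (gmap z u) = gmap z ((f z ^^ k) u)"
  by (simp add: gmap_def fk_vsub f_V funpow_swap1)
lemma gmap_V: "z<n \<Longrightarrow> gmap z u \<in> V z" by (simp add: gmap_def ppos)

lemma fk_sub_img: "z<n \<Longrightarrow> u \<in> V z \<Longrightarrow> vsub (p z) (d z) ((f z ^^ k) u) u \<in> gmap z ` V z"
proof (induction k)
  case 0
  have "gmap z vzero = vzero" using 0 by (simp add: gmap_def)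
  then show ?case using 0 ppos by (metis funpow_0 image_eqI vsub_self vzero_V)
next
  case (Suc k)
  have e: "vsub (p z) (d z) ((f z ^^ Suc k) u) u =
     vadd (p z) (d z) (gmap z ((f z ^^ k) u)) (vsub (p z) (d z) ((f z ^^ k) u) u)"
    unfolding gmap_def funpow.simps comp_apply by (rule vsub_trans)
  obtain v where v: "v \<in> V z" "vsub (p z) (d z) ((f z ^^ k) u) u = gmap z v" using Suc by auto
  have fk: "(f z ^^ k) u \<in> V z" using Suc fk_V by blast
  have "vsub (p z) (d z) ((f z ^^ Suc k) u) u = gmap z (vadd (p z) (d z) ((f z ^^ k) u) v)"
    using e v fk Suc by (simp add: gmap_add)
  moreover have "vadd (p z) (d z) ((f z ^^ k) u) v \<in> V z" using Suc ppos by simp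
  ultimately show ?case by blast
qed

lemma dir1: assumes z0: "z0 < n" and nb: "\<not> bij_betw (\<lambda>u. vsub (p z0) (d z0) (f z0 u) u) (V z0) (V z0)"
  shows "\<not> is_simple_left_brace (AP_carrier n p r d) (AP_add n p r d b) (AP_mul n p r d f)"
proof -
  let ?Img = "gmap z0 ` V z0"
  have ImgV: "?Img \<subseteq> V z0" using gmap_V z0 by auto
  have ne: "?Img \<noteq> V z0"
  proof
    assume eq: "?Img = V z0"
    then have "card ?Img = card (V z0)" by simp
    then have "inj_on (gmap z0) (V z0)" using inj_on_iff_eq_card Vsp_finite by blast
    then have "bij_betw (gmap z0) (V z0) (V z0)" using eq by (simp add: bij_betw_def)
    then show False using nb by (simp add: gmap_def[abs_def])
  qed
  then obtain v where v: "v \<in> V z0" "v \<notin> ?Img" using ImgV by auto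
  have zI: "vzero \<in> ?Img" using z0 ppos by (metis fk_sub_img funpow_0 vsub_self vzero_V)
  have addI: "vadd (p z0) (d z0) a c \<in> ?Img" if ha: "a \<in> ?Img" "c \<in> ?Img" for a c
  proof -
    obtain x y where xy: "x \<in> V z0" "y \<in> V z0" "a = gmap z0 x" "c = gmap z0 y" using ha by blast
    have "vadd (p z0) (d z0) a c = gmap z0 (vadd (p z0) (d z0) x y)" using xy z0 by (simp add: gmap_add)
    moreover have "vadd (p z0) (d z0) x y \<in> V z0" using z0 ppos by simp
    ultimately show ?thesis by blast
  qed
  have negI: "vneg (p z0) (d z0) a \<in> ?Img" if ha: "a \<in> ?Img" for a
  proof -
    obtain x where xy: "x \<in> V z0" "a = gmap z0 x" using ha by blast
    have "vneg (p z0) (d z0) a = gmap z0 (vneg (p z0) (d z0) x)" using xy z0 by (simp add: gmap_neg)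
    moreover have "vneg (p z0) (d z0) x \<in> V z0" using z0 ppos by simp
    ultimately show ?thesis by blast
  qed
  have fI: "(f z0 ^^ k) a \<in> ?Img" if ha: "a \<in> ?Img" for a k
  proof -
    obtain x where xy: "x \<in> V z0" "a = gmap z0 x" using ha by blast
    have "(f z0 ^^ k) a = gmap z0 ((f z0 ^^ k) x)" using xy z0 by (simp add: fk_gmap)
    moreover have "(f z0 ^^ k) x \<in> V z0" using z0 xy fk_V by simp
    ultimately show ?thesis by blast
  qed
  have dI: "vadd (p z0) (d z0) a (vneg (p z0) (d z0) ((f z0 ^^ k) a)) \<in> ?Img" if "a \<in> V z0" for a k
  proof -
    have "vadd (p z0) (d z0) a (vneg (p z0) (d z0) ((f z0 ^^ k) a)) = vneg (p z0) (d z0) (vsub (p z0) (d z0) ((f z0 ^^ k) a) a)"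
      by (metis vneg_vsub vsub_eq)
    then show ?thesis using negI fk_sub_img z0 that by simp
  qed
  define W where "W = {t \<in> TT. \<forall>i j. i < r z0 \<and> j < r (cprev n z0) \<longrightarrow> t z0 i j \<in> ?Img}"
  have W1: "W \<subseteq> TT" by (auto simp: W_def)
  have W2: "tzero \<in> W" using zI tzero_TT unfolding W_def tzero_def by simp
  have W3: "AP_tadd n p r d w w' \<in> W" if h: "w \<in> W" "w' \<in> W" for w w'
  proof -
    have "\<forall>i j. i < r z0 \<and> j < r (cprev n z0) \<longrightarrow> AP_tadd n p r d w w' z0 i j \<in> ?Img"
      using h z0 addI unfolding W_def AP_tadd_def by simp
    then show ?thesis unfolding W_def by simp
  qed
  have W4: "AP_tneg n p r d w \<in> W" if h: "w \<in> W" for w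
  proof -
    have "\<forall>i j. i < r z0 \<and> j < r (cprev n z0) \<longrightarrow> AP_tneg n p r d w z0 i j \<in> ?Img"
      using h z0 negI unfolding W_def AP_tneg_def by simp
    then show ?thesis unfolding W_def by simp
  qed
  have W5: "AP_alpha n p r f s w \<in> W" if h: "s \<in> SS" "w \<in> W" for s w
  proof -
    have "\<forall>i j. i < r z0 \<and> j < r (cprev n z0) \<longrightarrow> AP_alpha n p r f s w z0 i j \<in> ?Img"
      using h z0 fI unfolding W_def AP_alpha_def by simp
    moreover have "AP_alpha n p r f s w \<in> TT" using h W1 by auto
    ultimately show ?thesis unfolding W_def by simp
  qed
  have W6: "AP_tadd n p r d t (AP_tneg n p r d (AP_alpha n p r f s t)) \<in> W" if h: "s \<in> SS" "t \<in> TT" for s t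
  proof -
    have "\<forall>i j. i < r z0 \<and> j < r (cprev n z0) \<longrightarrow> AP_tadd n p r d t (AP_tneg n p r d (AP_alpha n p r f s t)) z0 i j \<in> ?Img"
    proof (intro allI impI)
      fix i j assume ij: "i < r z0 \<and> j < r (cprev n z0)"
      have tin: "t z0 i j \<in> V z0" using TT_in[OF h(2) z0] ij by blast
      show "AP_tadd n p r d t (AP_tneg n p r d (AP_alpha n p r f s t)) z0 i j \<in> ?Img"
        using ij z0 dI[OF tin] by (simp add: AP_alpha_def AP_tadd_def AP_tneg_def)
    qed
    then show ?thesis unfolding W_def by simp
  qed
  define t1 where "t1 = (\<lambda>z (i::nat) (j::nat). if z = z0 \<and> i = 0 \<and> j = 0 then v else vzero)"
  have r0: "0 < r z0" "0 < r (cprev n z0)" using rpos z0 cp by auto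
  have t1T: "t1 \<in> TT" unfolding AP_T_def t1_def using v z0 ppos r0 by auto
  have t1W: "t1 \<notin> W"
  proof
    assume "t1 \<in> W"
    then have "t1 z0 0 0 \<in> ?Img" using r0 unfolding W_def by blast
    then show False using v by (simp add: t1_def)
  qed
  define s1 where "s1 = (\<lambda>(z::nat) (i::nat). if z = 0 \<and> i = 0 then 1 else 0 :: int)"
  have n0: "0 < n" using n1 by simp
  have s1S: "s1 \<in> SS" unfolding AP_S_def s1_def using pgt1[OF n0] n0 rpos ppos by auto
  have s1z: "s1 \<noteq> szero"
  proof
    assume "s1 = szero" then have "s1 0 0 = szero 0 0" by simp
    then show False by (simp add: s1_def szero_def)
  qed
  have WT: "W \<noteq> TT" using t1T t1W by blast
  have "\<not> is_simple_left_brace (TT \<times> SS) (gadd (AP_tadd n p r d) (AP_sadd n p r) (AP_b n p r b))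
        (gmul (AP_tadd n p r d) (AP_sadd n p r) (AP_alpha n p r f))"
    by (rule ap.not_simple[OF W1 W2 W3 W4 W5 W6 WT s1S s1z])
  then show ?thesis by (simp add: car_eq add_eq mul_eq)
qed

end


definition tsingle :: "nat \<Rightarrow> nat \<Rightarrow> nat \<Rightarrow> vec \<Rightarrow> tcomp" where
  "tsingle z i j u = (\<lambda>z' i' j'. if z' = z \<and> i' = i \<and> j' = j then u else vzero)"
definition ssingle :: "nat \<Rightarrow> nat \<Rightarrow> int \<Rightarrow> scomp" where
  "ssingle z i c = (\<lambda>z' i'. if z' = z \<and> i' = i then c else 0)"

lemma ssingle_0: "ssingle z i 0 = szero" by (intro ext) (simp add: ssingle_def szero_def)

lemma vsub_vsub: "vsub p d (vsub p d a b) (vsub p d c e) = vsub p d (vsub p d a c) (vsub p d b e)"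
proof (rule ext)
  fix k
  have "(a k - b k) - (c k - e k) = (a k - c k) - (b k - e k)" by simp
  then show "vsub p d (vsub p d a b) (vsub p d c e) k = vsub p d (vsub p d a c) (vsub p d b e) k"
    by (simp add: vsub_def mod_diff_eq algebra_simps)
qed

lemma coprime_small: assumes "prime (q::nat)" "0 < m" "m < q" shows "gcd m q = 1"
proof -
  have "\<not> q dvd m" using assms by (simp add: nat_dvd_not_less)
  then have "coprime q m" using prime_imp_coprime assms(1) by blast
  then show ?thesis by (simp add: coprime_iff_gcd_eq_1 gcd.commute)
qed

lemma inverse_mod: assumes "prime (q::nat)" "0 < m" "m < q" shows "\<exists>x. (m * x) mod q = 1"
proof -
  obtain x y where "m * x = q * y + gcd m q" using bezout_nat[of m q] assms by auto
  then have "m * x = q * y + 1" using coprime_small assms by simp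
  then have "(m * x) mod q = 1 mod q" by (metis add.commute mod_mult_self1 mult.commute)
  also have "\<dots> = 1" using assms prime_gt_1_nat by simp
  finally show ?thesis by blast
qed

context setting begin

lemma tsingle_TT: "z<n \<Longrightarrow> i < r z \<Longrightarrow> j < r (cprev n z) \<Longrightarrow> u \<in> V z \<Longrightarrow> tsingle z i j u \<in> TT"
  by (auto simp: AP_T_def tsingle_def ppos)
lemma ssingle_SS: "z<n \<Longrightarrow> i < r z \<Longrightarrow> 0 \<le> c \<Longrightarrow> c < int (p z) \<Longrightarrow> ssingle z i c \<in> SS"
  by (auto simp: AP_S_def ssingle_def ppos)

lemma bf_single: assumes t: "t \<in> TT" and z: "z<n" "i < r z" "j < r (cprev n z)" and w: "w \<in> V z"
  shows "AP_b n p r b t (tsingle z i j w) = ssingle z i (b z (t z i j) w)"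
proof (rule ext, rule ext)
  fix z' i'
  show "AP_b n p r b t (tsingle z i j w) z' i' = ssingle z i (b z (t z i j) w) z' i'"
  proof (cases "z' < n \<and> i' < r z'")
    case True
    have "(\<Sum>j'<r (cprev n z'). b z' (t z' i' j') (tsingle z i j w z' i' j')) =
          (\<Sum>j'<r (cprev n z'). if j' = j \<and> z' = z \<and> i' = i then b z (t z i j) w else 0)"
      using True t by (intro sum.cong) (auto simp: tsingle_def b_zero_r TT_in)
    also have "\<dots> = (if z' = z \<and> i' = i then b z (t z i j) w else 0)"
      using z by (auto simp: sum.delta)
    finally show ?thesis using True b_range[OF z(1) TT_in[OF t z] w]
      by (auto simp: AP_b_def ssingle_def)
  next
    case False then show ?thesis using z by (auto simp: AP_b_def ssingle_def)
  qed
qed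

lemma alpha_single: assumes z: "z<n" "i < r z" "j < r (cprev n z)" and u: "u \<in> V z"
  shows "AP_alpha n p r f s (tsingle z i j u) = tsingle z i j ((f z ^^ nat (s (cprev n z) j)) u)"
  unfolding AP_alpha_def tsingle_def by (rule ext, rule ext, rule ext) (use z in auto)

lemma tsub_single: "z<n \<Longrightarrow> i < r z \<Longrightarrow> j < r (cprev n z) \<Longrightarrow> AP_tadd n p r d (tsingle z i j u) (AP_tneg n p r d (tsingle z i j u')) =
   tsingle z i j (vadd (p z) (d z) u (vneg (p z) (d z) u'))"
  unfolding AP_tadd_def AP_tneg_def tsingle_def by (rule ext, rule ext, rule ext) (auto simp: ppos)

lemma sadd_single: "z<n \<Longrightarrow> i < r z \<Longrightarrow> AP_sadd n p r (ssingle z i a) (ssingle z i a') = ssingle z i ((a + a') mod int (p z))"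
  unfolding AP_sadd_def ssingle_def by (rule ext, rule ext) auto

lemma V_nonzero: assumes "z<n" shows "\<exists>u\<in>V z. u \<noteq> vzero"
proof -
  have "1 < p (cprev n z)" using pgt1 cp by blast
  then obtain u where "u \<in> V z" "(f z ^^ 1) u \<noteq> u" using ford assms unfolding has_order_on_def by blast
  then have "f z u \<noteq> u" by simp
  then have "u \<noteq> vzero" using assms by auto
  then show ?thesis using \<open>u \<in> V z\<close> by blast
qed

lemma cprev_next: "z < n \<Longrightarrow> cprev n (Suc z mod n) = z"
proof (cases "Suc z < n")
  case True then show ?thesis by (simp add: cprev_def)
next
  case False
  assume "z < n"
  then have "Suc z = n" using False by simp
  then show ?thesis using n1 by (simp add: cprev_def)
qed

lemma surj_mu: assumes z: "z<n" and H: "bij_betw (\<lambda>u. vsub (p z) (d z) (f z u) u) (V z) (V z)"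
  and mu: "0 < \<mu>" "\<mu> < p (cprev n z)" and y: "y \<in> V z"
  shows "\<exists>w\<in>V z. vadd (p z) (d z) w (vneg (p z) (d z) ((f z ^^ \<mu>) w)) = y"
proof -
  let ?q = "p (cprev n z)"
  let ?K = "\<lambda>w. vsub (p z) (d z) ((f z ^^ \<mu>) w) w"
  have p0: "0 < p z" using ppos z by blast
  have injg: "inj_on (\<lambda>u. vsub (p z) (d z) (f z u) u) (V z)" using H bij_betw_def by blast
  have fix1: "v = vzero" if v: "v \<in> V z" "(f z ^^ \<mu>) v = v" for v
  proof -
    have it: "(f z ^^ (\<mu> * m)) v = v" for m
    proof (induction m)
      case 0 then show ?case by simp
    next
      case (Suc m)
      have "(f z ^^ (\<mu> * Suc m)) v = (f z ^^ \<mu>) ((f z ^^ (\<mu> * m)) v)"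
        by (simp add: funpow_add add.commute)
      then show ?case using Suc v by simp
    qed
    obtain x where x: "(\<mu> * x) mod ?q = 1" using inverse_mod[OF _ mu] pp cp by blast
    have "f z v = (f z ^^ ((\<mu> * x) mod ?q)) v" using x by simp
    also have "\<dots> = (f z ^^ (\<mu> * x)) v" using fk_mod[OF z v(1)] by simp
    also have "\<dots> = v" by (rule it)
    finally have "vsub (p z) (d z) (f z v) v = vsub (p z) (d z) (f z vzero) vzero" using z by simp
    then show "v = vzero" using injg v p0 unfolding inj_on_def by (metis vzero_V)
  qed
  have injK: "inj_on ?K (V z)"
  proof (rule inj_onI)
    fix w1 w2 assume w: "w1 \<in> V z" "w2 \<in> V z" "?K w1 = ?K w2"
    let ?v = "vsub (p z) (d z) w1 w2"
    have vV: "?v \<in> V z" using p0 by simp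
    have "?K ?v = vsub (p z) (d z) (?K w1) (?K w2)"
      using w z by (simp add: fk_vsub vsub_vsub)
    also have "\<dots> = vzero" using w by simp
    finally have "(f z ^^ \<mu>) ?v = ?v" using vsub_zero_iff fk_V[OF z vV] vV by blast
    then have "?v = vzero" using fix1 vV by blast
    then show "w1 = w2" using vsub_zero_iff w by blast
  qed
  have KV: "?K ` V z \<subseteq> V z" using p0 by auto
  have "card (?K ` V z) = card (V z)" by (rule card_image[OF injK])
  then have KV2: "?K ` V z = V z" by (rule card_subset_eq[OF Vsp_finite KV])
  have ny: "vneg (p z) (d z) y \<in> V z" using p0 by simp
  then have "vneg (p z) (d z) y \<in> ?K ` V z" unfolding KV2 .
  then obtain w where w: "w \<in> V z" "?K w = vneg (p z) (d z) y" by (rule imageE) (rule that, assumption, rule sym)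
  have "vadd (p z) (d z) w (vneg (p z) (d z) ((f z ^^ \<mu>) w)) = vneg (p z) (d z) (?K w)"
    by (subst vneg_vsub) (rule vsub_eq[symmetric])
  also have "\<dots> = y" using w y by simp
  finally show ?thesis using w by blast
qed

end


context setting begin

lemma S_decomp:
  assumes P0: "P szero" and Pc: "\<And>a a'. P a \<Longrightarrow> P a' \<Longrightarrow> P (AP_sadd n p r a a')"
    and Ps: "\<And>z i c. z<n \<Longrightarrow> i < r z \<Longrightarrow> 0 \<le> c \<Longrightarrow> c < int (p z) \<Longrightarrow> P (ssingle z i c)"
  shows "s \<in> SS \<Longrightarrow> P s"
proof (induction "card {(z,i). z<n \<and> i < r z \<and> s z i \<noteq> 0}" arbitrary: s rule: less_induct)
  case less
  let ?supp = "\<lambda>s. {(z,i). z<n \<and> i < r z \<and> s z i \<noteq> 0}"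
  have fin: "finite (?supp s')" for s'
    by (rule finite_subset[of _ "{..<n} \<times> {..<Max (r ` {..<n})}"]) (auto simp: less_le_trans[OF _ Max_ge])
  show ?case
  proof (cases "?supp s = {}")
    case True
    then have "s = szero" by (intro SS_ext[OF less.prems szero_SS]) (auto simp: szero_def)
    then show ?thesis using P0 by simp
  next
    case False
    then obtain z i where zi: "z<n" "i < r z" "s z i \<noteq> 0" by auto
    define s' where "s' = (\<lambda>z' i'. if z' = z \<and> i' = i then 0 else s z' i')"
    have s'S: "s' \<in> SS" using less.prems ppos unfolding s'_def AP_S_def by auto
    have e: "?supp s' = ?supp s - {(z,i)}" by (auto simp: s'_def)
    have "(z,i) \<in> ?supp s" using zi by simp
    then have "card (?supp s - {(z,i)}) < card (?supp s)" by (rule card_Diff1_less[OF fin])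
    then have "card (?supp s') < card (?supp s)" by (simp only: e)
    then have Ps': "P s'" using less.hyps s'S by blast
    have r: "0 \<le> s z i" "s z i < int (p z)" using SS_in[OF less.prems zi(1,2)] by auto
    have "s = AP_sadd n p r s' (ssingle z i (s z i))"
    proof (rule ext, rule ext)
      fix z' i'
      show "s z' i' = AP_sadd n p r s' (ssingle z i (s z i)) z' i'"
        using SS_in[OF less.prems, of z' i'] SS_out[OF less.prems, of z' i'] r
        by (auto simp: AP_sadd_def s'_def ssingle_def)
    qed
    then show ?thesis using Pc[OF Ps' Ps[OF zi(1,2) r]] by simp
  qed
qed

lemma T_decomp:
  assumes P0: "P tzero" and Pc: "\<And>a a'. P a \<Longrightarrow> P a' \<Longrightarrow> P (AP_tadd n p r d a a')"
    and Ps: "\<And>z i j u. z<n \<Longrightarrow> i < r z \<Longrightarrow> j < r (cprev n z) \<Longrightarrow> u \<in> V z \<Longrightarrow> P (tsingle z i j u)"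
  shows "t \<in> TT \<Longrightarrow> P t"
proof (induction "card {(z,i,j). z<n \<and> i < r z \<and> j < r (cprev n z) \<and> t z i j \<noteq> vzero}" arbitrary: t rule: less_induct)
  case less
  let ?supp = "\<lambda>t. {(z,i,j). z<n \<and> i < r z \<and> j < r (cprev n z) \<and> t z i j \<noteq> vzero}"
  let ?M = "Max (r ` {..<n})"
  have fin: "finite (?supp t')" for t'
  proof (rule finite_subset[of _ "{..<n} \<times> {..<?M} \<times> {..<?M}"])
    show "?supp t' \<subseteq> {..<n} \<times> {..<?M} \<times> {..<?M}"
    proof
      fix x assume "x \<in> ?supp t'"
      then obtain z i j where x: "x = (z,i,j)" "z<n" "i < r z" "j < r (cprev n z)" by auto
      have m1: "r z \<le> ?M" using x by (auto intro: Max_ge)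
      have m2: "r (cprev n z) \<le> ?M" using x cp by (auto intro: Max_ge)
      have "i < ?M" "j < ?M" using less_le_trans[OF x(3) m1] less_le_trans[OF x(4) m2] by auto
      then show "x \<in> {..<n} \<times> {..<?M} \<times> {..<?M}" using x by auto
    qed
  qed simp
  show ?case
  proof (cases "?supp t = {}")
    case True
    then have "t = tzero" by (intro TT_ext[OF less.prems tzero_TT]) (auto simp: tzero_def)
    then show ?thesis using P0 by simp
  next
    case False
    then obtain z i j where zi: "z<n" "i < r z" "j < r (cprev n z)" "t z i j \<noteq> vzero" by auto
    define t' where "t' = (\<lambda>z' i' j'. if z' = z \<and> i' = i \<and> j' = j then vzero else t z' i' j')"
    have t'T: "t' \<in> TT" using less.prems ppos unfolding t'_def AP_T_def by auto
    have e: "?supp t' = ?supp t - {(z,i,j)}" by (auto simp: t'_def)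
    have "(z,i,j) \<in> ?supp t" using zi by simp
    then have "card (?supp t - {(z,i,j)}) < card (?supp t)" by (rule card_Diff1_less[OF fin])
    then have "card (?supp t') < card (?supp t)" by (simp only: e)
    then have Pt': "P t'" using less.hyps t'T by blast
    have u: "t z i j \<in> V z" using TT_in[OF less.prems zi(1,2,3)] .
    have "t = AP_tadd n p r d t' (tsingle z i j (t z i j))"
    proof (rule ext, rule ext, rule ext)
      fix z' i' j'
      show "t z' i' j' = AP_tadd n p r d t' (tsingle z i j (t z i j)) z' i' j'"
        using TT_in[OF less.prems, of z' i' j'] TT_out[OF less.prems, of z' i' j'] u
        by (auto simp: AP_tadd_def t'_def tsingle_def)
    qed
    then show ?thesis using Pc[OF Pt' Ps[OF zi(1,2,3) u]] by simp
  qed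
qed

lemma mult_lemma:
  assumes z: "z<n" "k < r z" and beta: "0 < \<beta>" "\<beta> < int (p z)"
    and P0: "P szero" and Pc: "\<And>a a'. P a \<Longrightarrow> P a' \<Longrightarrow> P (AP_sadd n p r a a')"
    and Pb: "P (ssingle z k \<beta>)" and c: "0 \<le> c" "c < int (p z)"
  shows "P (ssingle z k c)"
proof -
  let ?p = "int (p z)"
  have it: "P (ssingle z k ((int m * \<beta>) mod ?p))" for m :: nat
  proof (induction m)
    case 0 then show ?case using P0 by (simp add: ssingle_0)
  next
    case (Suc m)
    have "AP_sadd n p r (ssingle z k ((int m * \<beta>) mod ?p)) (ssingle z k \<beta>) = ssingle z k ((int (Suc m) * \<beta>) mod ?p)"
      using z by (simp add: sadd_single mod_add_left_eq mod_add_right_eq algebra_simps)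
    then show ?case using Pc[OF Suc Pb] by simp
  qed
  have pr: "prime (p z)" using pp z by blast
  have nb: "0 < nat \<beta>" "nat \<beta> < p z" using beta by auto
  obtain x where x: "(nat \<beta> * x) mod p z = 1" using inverse_mod[OF pr nb] by blast
  have e1: "int (x * nat c) * \<beta> = int (nat c * (nat \<beta> * x))" using beta c by simp
  have "(nat c * (nat \<beta> * x)) mod p z = (nat c * ((nat \<beta> * x) mod p z)) mod p z" by (simp add: mod_mult_right_eq)
  also have "\<dots> = nat c" using x c by simp
  finally have "(int (x * nat c) * \<beta>) mod ?p = c" using e1 c by (metis int_nat_eq zmod_int)
  then show ?thesis using it[of "x * nat c"] by simp
qed

end


context setting begin

abbreviation "PADD \<equiv> gadd (AP_tadd n p r d) (AP_sadd n p r) (AP_b n p r b)"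
abbreviation "PMUL \<equiv> gmul (AP_tadd n p r d) (AP_sadd n p r) (AP_alpha n p r f)"

lemma ideal_full:
  assumes H: "\<forall>z<n. bij_betw (\<lambda>u. vsub (p z) (d z) (f z u) u) (V z) (V z)"
    and I: "is_brace_ideal (TT \<times> SS) PADD PMUL I" and ne: "I \<noteq> {(tzero, szero)}"
  shows "I = TT \<times> SS"
proof -
  have IB: "I \<subseteq> TT \<times> SS" by (rule ap.I_B[OF I])
  have I0: "(tzero, szero) \<in> I" by (rule ap.I_zero[OF I])
  have IJ: "(tzero, AP_sadd n p r a a') \<in> I" if "(tzero, a) \<in> I" "(tzero, a') \<in> I" for a a'
    by (rule ap.I_J[OF I that])
  have P0: "\<exists>\<sigma>. (tsingle z k j y, \<sigma>) \<in> I"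
    if s: "s \<in> SS" "(tzero, s) \<in> I" and z: "z<n" "j < r (cprev n z)" "s (cprev n z) j \<noteq> 0" "k < r z"
      and y: "y \<in> V z" for s z j k y
  proof -
    let ?mu = "nat (s (cprev n z) j)"
    have sr: "0 \<le> s (cprev n z) j" "s (cprev n z) j < int (p (cprev n z))" using SS_in[OF s(1) cp z(2)] by auto
    have mu: "0 < ?mu" "?mu < p (cprev n z)" using sr z(3) by auto
    obtain w where w: "w \<in> V z" "vadd (p z) (d z) w (vneg (p z) (d z) ((f z ^^ ?mu) w)) = y"
      using surj_mu[OF z(1) _ mu y] H z(1) by blast
    let ?t = "tsingle z k j w"
    have tT: "?t \<in> TT" using tsingle_TT z w by blast
    have "(AP_tadd n p r d ?t (AP_tneg n p r d (AP_alpha n p r f s ?t)), s) \<in> I"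
      by (rule ap.I_Bc[OF I s(2) tT])
    moreover have "AP_tadd n p r d ?t (AP_tneg n p r d (AP_alpha n p r f s ?t)) = tsingle z k j y"
      using z w by (simp add: alpha_single tsub_single)
    ultimately show ?thesis by auto
  qed
  have P1: "(tzero, ssingle z k c) \<in> I"
    if s: "s \<in> SS" "(tzero, s) \<in> I" and z: "z<n" "j < r (cprev n z)" "s (cprev n z) j \<noteq> 0" "k < r z"
      and c: "0 \<le> c" "c < int (p z)" for s z j k c
  proof -
    obtain y where y: "y \<in> V z" "y \<noteq> vzero" using V_nonzero z(1) by blast
    obtain w where w: "w \<in> V z" "b z y w \<noteq> 0" using b_nondeg[OF z(1) y] by blast
    obtain \<sigma> where sig: "(tsingle z k j y, \<sigma>) \<in> I" using P0[OF s z y(1)] by blast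
    have wT: "tsingle z k j w \<in> TT" using tsingle_TT z w by blast
    have yT: "tsingle z k j y \<in> TT" using tsingle_TT z y by blast
    have "(tzero, AP_b n p r b (fst (tsingle z k j y, \<sigma>)) (tsingle z k j w)) \<in> I"
      by (rule ap.I_A[OF I sig wT])
    moreover have "AP_b n p r b (tsingle z k j y) (tsingle z k j w) = ssingle z k (b z y w)"
      using bf_single[OF yT z(1,4,2) w(1)] by (simp add: tsingle_def)
    ultimately have Pb: "(tzero, ssingle z k (b z y w)) \<in> I" by simp
    have br: "0 < b z y w" "b z y w < int (p z)" using b_range[OF z(1) y(1) w(1)] w(2) by auto
    show ?thesis
      by (rule mult_lemma[where P="\<lambda>s. (tzero, s) \<in> I", OF z(1,4) br I0 IJ Pb c])
  qed
  define full where "full z \<longleftrightarrow> (\<forall>k<r z. \<forall>c. 0 \<le> c \<and> c < int (p z) \<longrightarrow> (tzero, ssingle z k c) \<in> I)" for z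
  have P2: "full (Suc z mod n)" if z: "z<n" "full z" for z
  proof -
    let ?s = "ssingle z 0 1"
    have r0: "0 < r z" using rpos z by blast
    have sS: "?s \<in> SS" using ssingle_SS[OF z(1) r0, of 1] pgt1[OF z(1)] by simp
    have sI: "(tzero, ?s) \<in> I" using z(2) r0 pgt1[OF z(1)] unfolding full_def by simp
    have z': "Suc z mod n < n" using n1 by simp
    have cpz: "cprev n (Suc z mod n) = z" using cprev_next z(1) by blast
    show ?thesis unfolding full_def
    proof (intro allI impI)
      fix k c assume kc: "k < r (Suc z mod n)" "0 \<le> c \<and> c < int (p (Suc z mod n))"
      show "(tzero, ssingle (Suc z mod n) k c) \<in> I"
        by (rule P1[OF sS sI z']) (use cpz r0 kc in \<open>auto simp: ssingle_def\<close>)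
    qed
  qed
  obtain s z0 j0 where st: "s \<in> SS" "(tzero, s) \<in> I" "z0 < n" "j0 < r z0" "s z0 j0 \<noteq> 0"
  proof -
    obtain x where x: "x \<in> I" "x \<noteq> (tzero, szero)" using ne I0 by blast
    obtain t \<sigma> where xt: "x = (t, \<sigma>)" "t \<in> TT" "\<sigma> \<in> SS" using x IB by auto
    show ?thesis
    proof (cases "t = tzero")
      case True
      then have "\<sigma> \<noteq> szero" using x xt by simp
      then obtain z i where zi: "z < n" "i < r z" "\<sigma> z i \<noteq> 0"
        using SS_ext[OF xt(3) szero_SS] by (auto simp: szero_def)
      show ?thesis by (rule that[OF xt(3) _ zi]) (use x xt True in simp)
    next
      case False
      then obtain z i j where zij: "z < n" "i < r z" "j < r (cprev n z)" "t z i j \<noteq> vzero"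
        using TT_ext[OF xt(2) tzero_TT] by (auto simp: tzero_def)
      have u: "t z i j \<in> V z" using TT_in[OF xt(2) zij(1,2,3)] .
      obtain w where w: "w \<in> V z" "b z (t z i j) w \<noteq> 0" using b_nondeg[OF zij(1) u zij(4)] by blast
      have wT: "tsingle z i j w \<in> TT" using tsingle_TT zij w by blast
      have "(tzero, AP_b n p r b (fst x) (tsingle z i j w)) \<in> I" by (rule ap.I_A[OF I x(1) wT])
      then have inI: "(tzero, ssingle z i (b z (t z i j) w)) \<in> I"
        using bf_single[OF xt(2) zij(1,2,3) w(1)] xt by simp
      have br: "0 \<le> b z (t z i j) w" "b z (t z i j) w < int (p z)" using b_range[OF zij(1) u w(1)] by auto
      have sS: "ssingle z i (b z (t z i j) w) \<in> SS" by (rule ssingle_SS[OF zij(1,2) br])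
      show ?thesis by (rule that[OF sS inI zij(1,2)]) (use w in \<open>simp add: ssingle_def\<close>)
    qed
  qed
  have F1: "full (Suc z0 mod n)" unfolding full_def
  proof (intro allI impI)
    fix k c assume kc: "k < r (Suc z0 mod n)" "0 \<le> c \<and> c < int (p (Suc z0 mod n))"
    have cpz: "cprev n (Suc z0 mod n) = z0" using cprev_next st(3) by blast
    have z': "Suc z0 mod n < n" using n1 by simp
    show "(tzero, ssingle (Suc z0 mod n) k c) \<in> I"
      by (rule P1[OF st(1,2) z', of j0]) (use cpz st kc in auto)
  qed
  have Fm: "full ((Suc z0 + m) mod n)" for m
  proof (induction m)
    case 0 then show ?case using F1 by simp
  next
    case (Suc m)
    have "full (Suc ((Suc z0 + m) mod n) mod n)" using P2[OF _ Suc] n1 by simp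
    then show ?case by (simp add: mod_Suc_eq)
  qed
  have Fall: "full z" if z: "z < n" for z
  proof -
    let ?a = "Suc z0"
    have am: "?a mod n < n" using n1 by simp
    have "(?a + (z + n - ?a mod n)) mod n = (?a mod n + (z + n - ?a mod n)) mod n" by (simp add: mod_add_left_eq)
    also have "?a mod n + (z + n - ?a mod n) = z + n" using am by simp
    also have "(z + n) mod n = z" using z by simp
    finally show ?thesis using Fm[of "z + n - ?a mod n"] by simp
  qed
  have allJ: "\<forall>s\<in>SS. (tzero, s) \<in> I"
  proof
    fix s assume sS: "s \<in> SS"
    show "(tzero, s) \<in> I"
    proof (rule S_decomp[where P="\<lambda>s. (tzero, s) \<in> I", OF I0 IJ _ sS])
      fix z i c assume zic: "z < n" "i < r z" "0 \<le> c" "c < int (p z)"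
      show "(tzero, ssingle z i c) \<in> I" using Fall[OF zic(1)] zic unfolding full_def by blast
    qed
  qed
  have allU: "\<forall>t\<in>TT. \<exists>\<sigma>. (t, \<sigma>) \<in> I"
  proof
    fix t assume tT: "t \<in> TT"
    show "\<exists>\<sigma>. (t, \<sigma>) \<in> I"
    proof (rule T_decomp[where P="\<lambda>t. \<exists>\<sigma>. (t, \<sigma>) \<in> I", OF _ _ _ tT])
      show "\<exists>\<sigma>. (tzero, \<sigma>) \<in> I" using I0 by blast
    next
      fix a a' assume "\<exists>\<sigma>. (a, \<sigma>) \<in> I" "\<exists>\<sigma>. (a', \<sigma>) \<in> I"
      then show "\<exists>\<sigma>. (AP_tadd n p r d a a', \<sigma>) \<in> I" using ap.I_U[OF I] by blast
    next
      fix z i j u assume zij: "z<n" "i < r z" "j < r (cprev n z)" "u \<in> V z"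
      let ?s = "ssingle (cprev n z) j 1"
      have c: "cprev n z < n" by (rule cp)
      have sS: "?s \<in> SS" using ssingle_SS[OF c zij(3), of 1] pgt1[OF c] by simp
      have sI: "(tzero, ?s) \<in> I" using allJ sS by blast
      show "\<exists>\<sigma>. (tsingle z i j u, \<sigma>) \<in> I"
        by (rule P0[OF sS sI zij(1,3) _ zij(2,4)]) (simp add: ssingle_def)
    qed
  qed
  show ?thesis by (rule ap.I_D[OF I allJ allU])
qed

lemma dir2: assumes H: "\<forall>z<n. bij_betw (\<lambda>u. vsub (p z) (d z) (f z u) u) (V z) (V z)"
  shows "is_simple_left_brace (AP_carrier n p r d) (AP_add n p r d b) (AP_mul n p r d f)"
proof -
  have n0: "0 < n" using n1 by simp
  define s1 where "s1 = ssingle 0 0 1"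
  have s1S: "s1 \<in> SS" unfolding s1_def using ssingle_SS[OF n0 _, of 0 1] rpos pgt1[OF n0] n0 by simp
  have s1z: "s1 \<noteq> szero"
  proof
    assume "s1 = szero" then have "s1 0 0 = szero 0 0" by simp
    then show False by (simp add: s1_def ssingle_def szero_def)
  qed
  have "is_simple_left_brace (TT \<times> SS) PADD PMUL"
    unfolding is_simple_left_brace_def
  proof (intro conjI allI impI)
    show "is_left_brace (TT \<times> SS) PADD PMUL" by (rule ap.is_brace)
    show "TT \<times> SS \<noteq> {\<one>\<^bsub>grp_of (TT \<times> SS) PADD\<^esub>}" using s1S s1z by auto
    fix L assume L: "is_brace_ideal (TT \<times> SS) PADD PMUL L"
    show "L = {\<one>\<^bsub>grp_of (TT \<times> SS) PADD\<^esub>} \<or> L = TT \<times> SS"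
      using ideal_full[OF H L] by auto
  qed
  then show ?thesis by (simp add: car_eq add_eq mul_eq)
qed

theorem main:
  "is_simple_left_brace (AP_carrier n p r d) (AP_add n p r d b) (AP_mul n p r d f)
     \<longleftrightarrow> (\<forall>z<n. bij_betw (\<lambda>u. vsub (p z) (d z) (f z u) u) (Vsp (p z) (d z)) (Vsp (p z) (d z)))"
  using dir1 dir2 by blast

end
theorem theorem6p2:
  fixes n :: nat and p r d :: "nat \<Rightarrow> nat"
    and b :: "nat \<Rightarrow> vec \<Rightarrow> vec \<Rightarrow> int" and f :: "nat \<Rightarrow> vec \<Rightarrow> vec"
  assumes "1 < n"
    and "\<forall>z<n. prime (p z)"
    and "\<forall>z<n. \<forall>z'<n. z \<noteq> z' \<longrightarrow> p z \<noteq> p z'"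
    and "\<forall>z<n. 0 < r z"
    and "\<forall>z<n. nonsing_sym_form (p z) (d z) (b z)"
    and "\<forall>z<n. f z \<in> orth_grp (p z) (d z) (b z)"
    and "\<forall>z<n. has_order_on (Vsp (p z) (d z)) (f z) (p (cprev n z))"
  shows "is_simple_left_brace (AP_carrier n p r d) (AP_add n p r d b) (AP_mul n p r d f)
     \<longleftrightarrow> (\<forall>z<n. bij_betw (\<lambda>u. vsub (p z) (d z) (f z u) u) (Vsp (p z) (d z)) (Vsp (p z) (d z)))"
proof -
  interpret setting n p r d b f using assms by (unfold_locales) auto
  show ?thesis by (rule main)
qed

end
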